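(* Let $a_k=2^k+1$ for $k\ge1$, and $S_n(\omega)=\sum_{k=1}^n\cos(2\pi a_k\omega)$, $\omega\in[0,1]$, viewed as a random variable on $[0,1]$ with Lebesgue measure. Then $\kappa_m(S_n)=0$ for every odd $m\ge1$ and every $n\ge1$, and $$\kappa_2(S_n)=\frac n2\ \ (n\ge1),\qquad \kappa_4(S_n)=\frac{-3n+28}{8}\ \ (n\ge4),\qquad \kappa_6(S_n)=\frac{45n^2+380n-1875}{16}\ \ (n\ge7).$$
   Context: For a bounded random variable $X$, its $m$-th cumulant is $\kappa_m(X)=\frac{d^m}{dt^m}\log\mathbb E[e^{tX}]\big|_{t=0}$. *)

theory Defs
  imports "HOL-Analysis.Analysis"
begin

definition mgf :: "'a measure \<Rightarrow> ('a \<Rightarrow> real) \<Rightarrow> real \<Rightarrow> real" where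
  "mgf M X t = (\<integral>x. exp (t * X x) \<partial>M)"

definition cumulant :: "'a measure \<Rightarrow> ('a \<Rightarrow> real) \<Rightarrow> nat \<Rightarrow> real" where
  "cumulant M X m = (deriv ^^ m) (\<lambda>t. ln (mgf M X t)) 0"

definition a_seq :: "nat \<Rightarrow> nat" where
  "a_seq k = 2 ^ k + 1"

definition S :: "nat \<Rightarrow> real \<Rightarrow> real" where
  "S n \<omega> = (\<Sum>k=1..n. cos (2 * pi * real (a_seq k) * \<omega>))"

end

theory Submission
  imports Defs
begin

fun Zs :: "'i set \<Rightarrow> ('i \<Rightarrow> int) \<Rightarrow> nat \<Rightarrow> (int \<Rightarrow> real) \<Rightarrow> real" where
  "Zs A w 0 f = f 0"
| "Zs A w (Suc a) f = (\<Sum>x\<in>A. Zs A w a (\<lambda>s. f (w x + s)))"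

lemma Zs_sum: "Zs A w a (\<lambda>s. \<Sum>y\<in>B. f y s) = (\<Sum>y\<in>B. Zs A w a (f y))"
proof (induction a arbitrary: f)
  case 0 then show ?case by simp
next
  case (Suc a) then show ?case by (simp add: sum.swap[of _ A])
qed

lemma Zs_add: "Zs A w a (\<lambda>s. f s + g s) = Zs A w a f + Zs A w a g"
  by (induction a arbitrary: f g) (simp_all add: sum.distrib)

lemma Zs_zero: "Zs A w a (\<lambda>s. 0) = 0"
  by (induction a) auto

definition pw :: "nat \<Rightarrow> int" where "pw k = 2 ^ k"

definition G :: "nat \<Rightarrow> nat \<Rightarrow> int \<Rightarrow> nat \<Rightarrow> nat \<Rightarrow> nat \<Rightarrow> nat \<Rightarrow> real" where
  "G n r j a c a' c' = Zs ({1..n} \<times> {1,-1}) (\<lambda>(k,e). e * (2^k+1)) r (\<lambda>s0.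
     Zs {1..n} pw a (\<lambda>s1. Zs {1..n} pw c (\<lambda>s2. Zs {1..n-1} pw a' (\<lambda>s3.
     Zs {1..n-1} pw c' (\<lambda>s4. if s0 + j + s1 - s2 + 2 * s3 - 2 * s4 = 0 then 1 else 0)))))"

lemma sum_times_split: "(\<Sum>x\<in>A \<times> B. f x) = (\<Sum>a\<in>A. \<Sum>b\<in>B. f (a,b))"
  by (simp add: sum.cartesian_product)

lemma G_r: "G n (Suc r) j a c a' c' = G n r (j+1) (Suc a) c a' c' + G n r (j-1) a (Suc c) a' c'"
  unfolding G_def
  by (simp add: Zs_sum sum_times_split sum.distrib algebra_simps pw_def)

lemma sum_Suc_split: "(\<Sum>x\<in>{1..Suc n}. f x) = f 1 + (\<Sum>y\<in>{1..n}. f (Suc y))"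
proof -
  have "(\<Sum>x\<in>{1..Suc n}. f x) = f 1 + (\<Sum>x\<in>{Suc 1..Suc n}. f x)"
    by (simp add: sum.atLeast_Suc_atMost del: sum.cl_ivl_Suc)
  also have "(\<Sum>x\<in>{Suc 1..Suc n}. f x) = (\<Sum>y\<in>{1..n}. f (Suc y))"
    by (rule sum.shift_bounds_cl_Suc_ivl)
  finally show ?thesis .
qed

lemma G_a: "G (Suc n) 0 j (Suc a) c a' c' = G (Suc n) 0 (j+2) a c a' c' + G (Suc n) 0 j a c (Suc a') c'"
  unfolding G_def Zs.simps
  apply (subst sum_Suc_split)
  apply (simp add: Zs_sum Zs_add sum.distrib algebra_simps pw_def del: sum.cl_ivl_Suc)
  done

lemma G_c: "G (Suc n) 0 j a (Suc c) a' c' = G (Suc n) 0 (j-2) a c a' c' + G (Suc n) 0 j a c a' (Suc c')"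
  unfolding G_def Zs.simps
  apply (subst sum_Suc_split)
  apply (simp add: Zs_sum Zs_add sum.distrib algebra_simps pw_def del: sum.cl_ivl_Suc)
  done

lemma G_0: "G (Suc n) 0 j 0 0 a' c' = (if even j then G n 0 (j div 2) a' c' 0 0 else 0)"
proof (cases "even j")
  case True
  then obtain m where m: "j = 2 * m" by blast
  have e: "\<And>x y::int. (x * 2 + m * 2 = y * 2) = (x + m = y)" by auto
  show ?thesis unfolding G_def using True m
    by (simp add: algebra_simps e)
next
  case False
  have "\<And>s3 s4. j + 2 * s3 - 2 * s4 \<noteq> 0"
    using False by (metis dvd_add_left_iff dvd_diff dvd_triv_left even_zero add_diff_eq)
  then show ?thesis unfolding G_def using False
    by (simp add: Zs_zero algebra_simps)
qed

definition L :: "nat \<Rightarrow> int \<Rightarrow> nat \<Rightarrow> nat \<Rightarrow> real" where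
  "L n j a c = G n 0 j a c 0 0"

fun V :: "(int \<Rightarrow> nat \<Rightarrow> nat \<Rightarrow> real) \<Rightarrow> int \<Rightarrow> nat \<Rightarrow> nat \<Rightarrow> nat \<Rightarrow> nat \<Rightarrow> real" where
  "V f j (Suc a) c a' c' = V f (j+2) a c a' c' + V f j a c (Suc a') c'"
| "V f j 0 (Suc c) a' c' = V f (j-2) 0 c a' c' + V f j 0 c a' (Suc c')"
| "V f j 0 0 a' c' = (if even j then f (j div 2) a' c' else 0)"

lemma G_V: "G (Suc n) 0 j a c a' c' = V (L n) j a c a' c'"
  by (induction "L n" j a c a' c' rule: V.induct) (simp_all add: G_a G_c G_0 L_def)

fun W :: "(int \<Rightarrow> nat \<Rightarrow> nat \<Rightarrow> real) \<Rightarrow> nat \<Rightarrow> int \<Rightarrow> nat \<Rightarrow> nat \<Rightarrow> real" where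
  "W f 0 j a c = f j a c"
| "W f (Suc r) j a c = W f r (j+1) (Suc a) c + W f r (j-1) a (Suc c)"

lemma G_W: "G n r j a c 0 0 = W (L n) r j a c"
  by (induction r arbitrary: j a c) (simp_all add: G_r L_def)

lemma L_Suc: "L (Suc n) j a c = V (L n) j a c 0 0"
  using G_V L_def by simp

lemma L_0: "L 0 j a c = (if j = 0 \<and> a = 0 \<and> c = 0 then 1 else 0)"
  unfolding L_def G_def by (cases a; cases c; simp)



definition wt :: "nat \<times> int \<Rightarrow> int" where "wt = (\<lambda>(k,e). e * (2^k+1))"

lemma Zs_cmult: "Zs A w a (\<lambda>s. c * f s) = c * Zs A w a f"
  by (induction a arbitrary: f) (simp_all add: sum_distrib_left)

lemma cos_prod_aux:
  fixes a s :: int and x :: real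
  shows
  "cos (2 * pi * of_int (a+s) * x) + cos (2 * pi * of_int (-a+s) * x) = 2 * cos (2 * pi * of_int a * x) * cos (2 * pi * of_int s * x)"
proof -
  have "cos (2 * pi * of_int (a+s) * x) = cos (2 * pi * of_int s * x + 2 * pi * of_int a * x)"
    by (simp add: algebra_simps)
  moreover have "cos (2 * pi * of_int (-a+s) * x) = cos (2 * pi * of_int s * x - 2 * pi * of_int a * x)"
    by (simp add: algebra_simps)
  ultimately show ?thesis by (simp add: cos_add cos_diff)
qed

lemma S_alt: "S n x = (\<Sum>k=1..n. cos (2 * pi * of_int (2^k+1) * x))"
  unfolding S_def a_seq_def by (simp add: add.commute)

lemma S_pow: "S n x ^ r = Zs ({1..n} \<times> {1,-1}) wt r (\<lambda>s. cos (2 * pi * of_int s * x)) / 2^r"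
proof (induction r)
  case 0 then show ?case by simp
next
  case (Suc r)
  let ?F = "\<lambda>s::int. cos (2 * pi * of_int s * x)"
  have "Zs ({1..n} \<times> {1,-1}) wt (Suc r) ?F =
     (\<Sum>k=1..n. Zs ({1..n} \<times> {1,-1}) wt r (\<lambda>s. ?F ((2^k+1) + s) + ?F (-(2^k+1) + s)))"
    by (simp add: sum_times_split wt_def Zs_add)
  also have "\<dots> = (\<Sum>k=1..n. Zs ({1..n} \<times> {1,-1}) wt r (\<lambda>s. 2 * cos (2 * pi * of_int (2^k+1) * x) * ?F s))"
    by (intro sum.cong refl arg_cong[where f="Zs _ _ _"] ext cos_prod_aux)
  also have "\<dots> = 2 * S n x * Zs ({1..n} \<times> {1,-1}) wt r ?F"
    by (simp add: Zs_cmult S_alt sum_distrib_left sum_distrib_right mult.assoc)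
  finally show ?case using Suc by (simp add: field_simps)
qed

lemma Zs_integral:
  assumes "\<And>s. integrable M (g s)"
  shows "integrable M (\<lambda>x. Zs A w r (\<lambda>s. g s x)) \<and>
         (\<integral>x. Zs A w r (\<lambda>s. g s x) \<partial>M) = Zs A w r (\<lambda>s. \<integral>x. g s x \<partial>M)"
  using assms
proof (induction r arbitrary: g)
  case 0 then show ?case by simp
next
  case (Suc r)
  have I: "integrable M (\<lambda>x. Zs A w r (\<lambda>s. g (w y + s) x)) \<and>
     (\<integral>x. Zs A w r (\<lambda>s. g (w y + s) x) \<partial>M) = Zs A w r (\<lambda>s. \<integral>x. g (w y + s) x \<partial>M)" for y
    using Suc.IH[of "\<lambda>s. g (w y + s)"] Suc.prems by simp
  have eq: "(\<lambda>x. Zs A w (Suc r) (\<lambda>s. g s x)) = (\<lambda>x. \<Sum>y\<in>A. Zs A w r (\<lambda>s. g (w y + s) x))"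
    by simp
  have i1: "integrable M (\<lambda>x. Zs A w (Suc r) (\<lambda>s. g s x))"
    unfolding eq by (rule Bochner_Integration.integrable_sum) (use I in blast)
  have "(\<integral>x. Zs A w (Suc r) (\<lambda>s. g s x) \<partial>M) = (\<Sum>y\<in>A. \<integral>x. Zs A w r (\<lambda>s. g (w y + s) x) \<partial>M)"
    unfolding eq by (rule Bochner_Integration.integral_sum) (use I in blast)
  also have "\<dots> = (\<Sum>y\<in>A. Zs A w r (\<lambda>s. \<integral>x. g (w y + s) x \<partial>M))"
    by (intro sum.cong refl) (use I in blast)
  also have "\<dots> = Zs A w (Suc r) (\<lambda>s. \<integral>x. g s x \<partial>M)"
    by simp
  finally show ?case using i1 by blast
qed

lemma cos_integral:
  "(\<integral>x. cos (2 * pi * of_int m * x) \<partial>lebesgue_on {0..1}) = (if m = 0 then 1 else 0)"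
proof -
  have c: "continuous_on {0..1} (\<lambda>x::real. cos (2 * pi * of_int m * x))"
    by (intro continuous_intros)
  have "(\<integral>x. cos (2 * pi * of_int m * x) \<partial>lebesgue_on {0..1}) = integral {0..1} (\<lambda>x. cos (2 * pi * of_int m * x))"
    by (intro lebesgue_integral_eq_integral continuous_imp_integrable_real c) auto
  also have "\<dots> = (if m = 0 then 1 else 0)"
  proof (cases "m = 0")
    case True then show ?thesis by simp
  next
    case False
    have d: "\<And>x. ((\<lambda>x. sin (2 * pi * of_int m * x) / (2 * pi * of_int m)) has_vector_derivative cos (2 * pi * of_int m * x)) (at x within {0..1})"
      unfolding has_real_derivative_iff_has_vector_derivative[symmetric]
      using False by (auto intro!: derivative_eq_intros simp: field_simps)
    have "((\<lambda>x. cos (2 * pi * of_int m * x)) has_integral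
       (sin (2 * pi * of_int m * 1) / (2 * pi * of_int m) - sin (2 * pi * of_int m * 0) / (2 * pi * of_int m))) {0..1}"
      by (rule fundamental_theorem_of_calculus) (use d in auto)
    then have "((\<lambda>x. cos (2 * pi * of_int m * x)) has_integral 0) {0..1}"
      by simp
    then show ?thesis using False by (simp add: integral_unique)
  qed
  finally show ?thesis .
qed

definition mu :: "nat \<Rightarrow> nat \<Rightarrow> real" where
  "mu n r = (\<integral>x. S n x ^ r \<partial>lebesgue_on {0..1})"

lemma cos_integrable: "integrable (lebesgue_on {0..1}) (\<lambda>x. cos (2 * pi * of_int m * x))"
  by (intro continuous_imp_integrable_real continuous_intros)

lemma mu_G: "mu n r = G n r 0 0 0 0 0 / 2^r"
proof -
  have "mu n r = (\<integral>x. Zs ({1..n} \<times> {1,-1}) wt r (\<lambda>s. cos (2 * pi * of_int s * x)) \<partial>lebesgue_on {0..1}) / 2^r"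
    unfolding mu_def S_pow by simp
  also have "\<dots> = Zs ({1..n} \<times> {1,-1}) wt r (\<lambda>s. if s = 0 then 1 else 0) / 2^r"
    using Zs_integral[where M="lebesgue_on {0..1}" and g="\<lambda>s x. cos (2 * pi * of_int s * x)" and A="{1..n} \<times> {1,-1}" and w=wt and r=r, OF cos_integrable]
    by (simp add: cos_integral del: atLeastAtMost_iff)
  also have "\<dots> = G n r 0 0 0 0 0 / 2^r"
    unfolding G_def wt_def by simp
  finally show ?thesis .
qed

lemma Zs_odd:
  assumes "\<And>x. x \<in> A \<Longrightarrow> odd (w x)" "\<And>s. odd s = odd r \<Longrightarrow> f s = 0"
  shows "Zs A w r f = 0"
  using assms(2)
proof (induction r arbitrary: f)
  case 0 then show ?case by simp
next
  case (Suc r)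
  have "Zs A w r (\<lambda>s. f (w x + s)) = 0" if x: "x \<in> A" for x
  proof (rule Suc.IH)
    fix s :: int assume "odd s = odd r"
    then have "odd (w x + s) = odd (Suc r)" using assms(1)[OF x] by auto
    then show "f (w x + s) = 0" by (rule Suc.prems)
  qed
  then show ?case by simp
qed

lemma mu_odd: assumes "odd r" shows "mu n r = 0"
proof -
  have "Zs ({1..n} \<times> {1,-1}) wt r (\<lambda>s0. Zs {1..n} pw 0 (\<lambda>s1. Zs {1..n} pw 0 (\<lambda>s2. Zs {1..n-1} pw 0 (\<lambda>s3.
     Zs {1..n-1} pw 0 (\<lambda>s4. if s0 + 0 + s1 - s2 + 2 * s3 - 2 * s4 = 0 then 1 else 0))))) = 0"
  proof (rule Zs_odd)
    fix x assume "x \<in> {1..n} \<times> {1,-1::int}"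
    then obtain k e where "x = (k,e)" "k \<ge> 1" "e = 1 \<or> e = -1" by auto
    then show "odd (wt x)" by (auto simp: wt_def)
  next
    fix s :: int assume "odd s = odd r"
    with assms have "s \<noteq> 0" by auto
    then show "Zs {1..n} pw 0 (\<lambda>s1. Zs {1..n} pw 0 (\<lambda>s2. Zs {1..n-1} pw 0 (\<lambda>s3.
     Zs {1..n-1} pw 0 (\<lambda>s4. if s + 0 + s1 - s2 + 2 * s3 - 2 * s4 = 0 then 1 else 0)))) = 0" by simp
  qed
  then show ?thesis by (simp add: mu_G G_def wt_def)
qed



lemma S_cont [continuous_intros]: "continuous_on A (\<lambda>x. S n x)"
  unfolding S_def by (intro continuous_intros)

lemma S_bound: "\<bar>S n x\<bar> \<le> real n"
proof -
  have "\<bar>S n x\<bar> \<le> (\<Sum>k=1..n. \<bar>cos (2 * pi * real (a_seq k) * x)\<bar>)"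
    unfolding S_def by (rule sum_abs)
  also have "\<dots> \<le> (\<Sum>k=1..n. 1)"
    by (intro sum_mono) auto
  finally show ?thesis by simp
qed

abbreviation "M01 \<equiv> lebesgue_on {0..1::real}"

lemma M01_meas: "measure M01 {0..1} = 1"
  by (simp add: measure_restrict_space)

lemma M01_const: "(\<integral>x. c \<partial>M01) = (c::real)"
  by (simp add: M01_meas)

lemma mgf_sums: "(\<lambda>i. mu n i / fact i * t ^ i) sums mgf M01 (S n) t"
proof -
  define f where "f i x = (t * S n x) ^ i / fact i" for i x
  have int: "integrable M01 (f i)" for i
    unfolding f_def by (intro continuous_imp_integrable_real continuous_intros) auto
  have summ: "AE x in M01. summable (\<lambda>i. norm (f i x))"
  proof (intro AE_I2)
    fix x
    show "summable (\<lambda>i. norm (f i x))"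
      using summable_exp[of "\<bar>t * S n x\<bar>"]
      by (simp add: f_def abs_mult power_abs divide_inverse mult.commute)
  qed
  have bnd: "(\<integral>x. norm (f i x) \<partial>M01) \<le> (\<bar>t\<bar> * real n) ^ i / fact i" for i
  proof -
    have "(\<integral>x. norm (f i x) \<partial>M01) \<le> (\<integral>x. (\<bar>t\<bar> * real n) ^ i / fact i \<partial>M01)"
    proof (intro integral_mono)
      show "integrable M01 (\<lambda>x. norm (f i x))" using int by simp
      show "integrable M01 (\<lambda>x. (\<bar>t\<bar> * real n) ^ i / fact i)"
        by (intro continuous_imp_integrable_real continuous_intros)
      fix x
      have "\<bar>t * S n x\<bar> \<le> \<bar>t\<bar> * real n"
        using S_bound[of n x] by (simp add: abs_mult mult_left_mono)
      then have "\<bar>t * S n x\<bar> ^ i \<le> (\<bar>t\<bar> * real n) ^ i"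
        by (intro power_mono) auto
      then show "norm (f i x) \<le> (\<bar>t\<bar> * real n) ^ i / fact i"
        by (simp add: f_def abs_mult power_abs divide_right_mono)
    qed
    then show ?thesis by (simp add: M01_meas)
  qed
  have sumint: "summable (\<lambda>i. \<integral>x. norm (f i x) \<partial>M01)"
  proof (rule summable_comparison_test)
    show "\<exists>N. \<forall>i\<ge>N. norm (\<integral>x. norm (f i x) \<partial>M01) \<le> (\<bar>t\<bar> * real n) ^ i / fact i"
      using bnd by (auto simp: integral_nonneg_AE)
    show "summable (\<lambda>i. (\<bar>t\<bar> * real n) ^ i / fact i)"
      using summable_exp[of "\<bar>t\<bar> * real n"] by (simp add: divide_inverse mult.commute)
  qed
  have "(\<lambda>i. integral\<^sup>L M01 (f i)) sums (\<integral>x. (\<Sum>i. f i x) \<partial>M01)"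
    by (rule sums_integral[OF int summ sumint])
  moreover have "integral\<^sup>L M01 (f i) = mu n i / fact i * t ^ i" for i
    unfolding f_def mu_def by (simp add: power_mult_distrib field_simps)
  moreover have "(\<Sum>i. f i x) = exp (t * S n x)" for x
  proof -
    have "(\<lambda>i. f i x) sums exp (t * S n x)"
      using exp_converges[of "t * S n x"] by (simp add: f_def divide_inverse mult.commute)
    then show ?thesis by (rule sums_unique[symmetric])
  qed
  ultimately show ?thesis by (simp add: mgf_def)
qed

definition Mf :: "nat \<Rightarrow> real fps" where "Mf n = Abs_fps (\<lambda>i. mu n i / fact i)"

lemma Mf_nth: "fps_nth (Mf n) i = mu n i / fact i"
  by (simp add: Mf_def)

lemma eval_Mf: "eval_fps (Mf n) t = mgf M01 (S n) t"
  unfolding eval_fps_def Mf_nth using mgf_sums[of n t] by (simp add: sums_iff)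

lemma Mf_radius: "fps_conv_radius (Mf n) = \<infinity>"
  unfolding fps_conv_radius_def
proof (rule conv_radius_inftyI'[where c=0])
  fix r :: real assume "r > 0"
  then show "\<exists>z. norm z = r \<and> summable (\<lambda>i. fps_nth (Mf n) i * z ^ i)"
    using mgf_sums[of n r] by (intro exI[of _ r]) (auto simp: Mf_nth sums_iff)
qed

lemma fps_nth_conv_deriv_real:
  fixes f :: "real fps"
  assumes "fps_conv_radius f > 0"
  shows "fps_nth f n = (deriv ^^ n) (eval_fps f) 0 / fact n"
  using assms
proof (induction n arbitrary: f)
  case 0
  thus ?case by (simp add: eval_fps_def)
next
  case (Suc n f)
  have "(deriv ^^ Suc n) (eval_fps f) 0 = (deriv ^^ n) (deriv (eval_fps f)) 0"
    unfolding funpow_Suc_right o_def ..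
  also have "eventually (\<lambda>z::real. z \<in> eball 0 (fps_conv_radius f)) (nhds 0)"
    using Suc.prems by (intro eventually_nhds_in_open) (auto simp: zero_ereal_def)
  hence "eventually (\<lambda>z. deriv (eval_fps f) z = eval_fps (fps_deriv f) z) (nhds 0)"
    by eventually_elim (simp add: eval_fps_deriv)
  hence "(deriv ^^ n) (deriv (eval_fps f)) 0 = (deriv ^^ n) (eval_fps (fps_deriv f)) 0"
    by (intro higher_deriv_cong_ev refl)
  also have "\<dots> / fact n = fps_nth (fps_deriv f) n"
    using Suc.prems fps_conv_radius_deriv[of f]
    by (intro Suc.IH [symmetric]) auto
  also have "\<dots> / of_nat (Suc n) = fps_nth f (Suc n)"
    by (simp add: fps_deriv_def del: of_nat_Suc)
  finally show ?case by (simp add: field_split_simps)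
qed

lemma fps_nth_fps_expansion_real:
  fixes f :: "real \<Rightarrow> real"
  assumes "f has_fps_expansion F"
  shows   "fps_nth F n = (deriv ^^ n) f 0 / fact n"
proof -
  have "fps_nth F n = (deriv ^^ n) (eval_fps F) 0 / fact n"
    using assms by (intro fps_nth_conv_deriv_real) (auto simp: has_fps_expansion_def)
  also have "(deriv ^^ n) (eval_fps F) 0 = (deriv ^^ n) f 0"
    using assms by (intro higher_deriv_cong_ev) (auto simp: has_fps_expansion_def)
  finally show ?thesis .
qed

lemma mu0: "mu n 0 = 1"
  unfolding mu_def by (simp add: M01_meas)

lemma Mf0: "fps_nth (Mf n) 0 = 1"
  by (simp add: Mf_nth mu0)

definition Q :: "nat \<Rightarrow> real fps" where "Q n = fps_deriv (Mf n) / Mf n"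

lemma mgf_pos: "mgf M01 (S n) t > 0"
proof -
  have "(\<integral>x. exp (- (\<bar>t\<bar> * real n)) \<partial>M01) \<le> (\<integral>x. exp (t * S n x) \<partial>M01)"
  proof (intro integral_mono)
    show "integrable M01 (\<lambda>x. exp (- (\<bar>t\<bar> * real n)))"
      by (intro continuous_imp_integrable_real continuous_intros)
    show "integrable M01 (\<lambda>x. exp (t * S n x))"
      by (intro continuous_imp_integrable_real continuous_intros)
    fix x
    have "\<bar>t * S n x\<bar> \<le> \<bar>t\<bar> * real n"
      using S_bound[of n x] by (simp add: abs_mult mult_left_mono)
    then show "exp (- (\<bar>t\<bar> * real n)) \<le> exp (t * S n x)" by simp
  qed
  then show ?thesis unfolding mgf_def using M01_const
    by (metis exp_gt_zero order_less_le_trans)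
qed

lemma cumulant_Q: "cumulant M01 (S n) (Suc m) = fact m * fps_nth (Q n) m"
proof -
  let ?h = "eval_fps (Mf n)"
  have mg: "mgf M01 (S n) = ?h" by (rule ext) (simp add: eval_Mf)
  have hpos: "?h t > 0" for t using mgf_pos[of n t] by (simp add: eval_Mf)
  let ?g = "\<lambda>t. ln (?h t)"
  let ?k = "\<lambda>t. eval_fps (fps_deriv (Mf n)) t / ?h t"
  have dk: "deriv ?g t = ?k t" for t
  proof -
    have hd: "(?h has_field_derivative eval_fps (fps_deriv (Mf n)) t) (at t)"
      by (rule has_field_derivative_eval_fps) (simp add: Mf_radius)
    have "(?g has_field_derivative (1 / ?h t) * eval_fps (fps_deriv (Mf n)) t) (at t)"
      by (rule DERIV_chain2[OF DERIV_ln_divide[OF hpos] hd])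
    then have "deriv ?g t = (1 / ?h t) * eval_fps (fps_deriv (Mf n)) t"
      by (rule DERIV_imp_deriv)
    then show ?thesis by simp
  qed
  have ev: "eventually (\<lambda>t. deriv ?g t = ?k t) (nhds 0)"
    using dk by (intro always_eventually) blast
  have rad: "fps_conv_radius (fps_deriv (Mf n)) > 0"
    using fps_conv_radius_deriv[of "Mf n"] by (simp add: Mf_radius)
  have kexp: "?k has_fps_expansion Q n"
    unfolding Q_def
  proof (rule has_fps_expansion_divide')
    show "eval_fps (fps_deriv (Mf n)) has_fps_expansion fps_deriv (Mf n)"
      by (rule eval_fps_has_fps_expansion[OF rad])
    show "eval_fps (Mf n) has_fps_expansion Mf n"
      by (rule eval_fps_has_fps_expansion) (simp add: Mf_radius)
    show "fps_nth (Mf n) 0 \<noteq> 0" by (simp add: Mf0)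
  qed
  have "cumulant M01 (S n) (Suc m) = (deriv ^^ m) (deriv ?g) 0"
    unfolding cumulant_def mg funpow_Suc_right o_def ..
  also have "\<dots> = (deriv ^^ m) ?k 0"
    by (intro higher_deriv_cong_ev ev refl)
  also have "\<dots> = fact m * fps_nth (Q n) m"
    using fps_nth_fps_expansion_real[OF kexp, of m] by (simp add: field_simps)
  finally show ?thesis .
qed

lemma QMf: "Q n * Mf n = fps_deriv (Mf n)"
  unfolding Q_def by (simp add: fps_divide_unit Mf0 mult.assoc inverse_mult_eq_1)

lemma Mf_odd: "odd i \<Longrightarrow> fps_nth (Mf n) i = 0"
  by (simp add: Mf_nth mu_odd)

lemma Q_even: "even k \<Longrightarrow> fps_nth (Q n) k = 0"
proof (induction k rule: less_induct)
  case (less k)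
  have "fps_nth (Q n * Mf n) k = (\<Sum>i=0..k. fps_nth (Q n) i * fps_nth (Mf n) (k - i))"
    by (rule fps_mult_nth)
  also have "\<dots> = (\<Sum>i<k. fps_nth (Q n) i * fps_nth (Mf n) (k - i)) + fps_nth (Q n) k"
    by (simp add: atLeast0AtMost lessThan_Suc_atMost[symmetric] Mf0)
  also have "(\<Sum>i<k. fps_nth (Q n) i * fps_nth (Mf n) (k - i)) = 0"
  proof (intro sum.neutral ballI)
    fix i assume "i \<in> {..<k}"
    then have "i < k" by simp
    show "fps_nth (Q n) i * fps_nth (Mf n) (k - i) = 0"
    proof (cases "even i")
      case True then show ?thesis using less.IH[OF \<open>i < k\<close>] by simp
    next
      case False
      then have "odd (k - i)" using less.prems \<open>i < k\<close> by auto
      then show ?thesis by (simp add: Mf_odd)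
    qed
  qed
  finally have "fps_nth (Q n * Mf n) k = fps_nth (Q n) k" by simp
  moreover have "fps_nth (Q n * Mf n) k = 0"
    unfolding QMf using less.prems by (simp add: Mf_odd)
  ultimately show ?case by simp
qed

lemma cumulant_odd: "odd m \<Longrightarrow> cumulant M01 (S n) m = 0"
  by (cases m) (auto simp: cumulant_Q Q_even)

lemma Qk: "fps_nth (Q n * Mf n) k = fps_nth (fps_deriv (Mf n)) k"
  by (simp add: QMf)

lemma cumulant_2: "cumulant M01 (S n) 2 = mu n 2"
proof -
  have "fps_nth (Q n * Mf n) 1 = fps_nth (fps_deriv (Mf n)) 1" by (rule Qk)
  then have "fps_nth (Q n) 1 = mu n 2"
    by (simp add: fps_mult_nth Q_even Mf_odd Mf0 Mf_nth mu0 numeral_2_eq_2)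
  then show ?thesis using cumulant_Q[of n 1] by (simp add: numeral_2_eq_2)
qed

lemma sum6: "(\<Sum>i::nat=0..5. f i) = f 0 + f 1 + f 2 + f 3 + f 4 + (f 5 :: real)"
  by (simp add: eval_nat_numeral)
lemma sum4: "(\<Sum>i::nat=0..3. f i) = f 0 + f 1 + f 2 + (f 3 :: real)"
  by (simp add: eval_nat_numeral)
lemma fact_vals: "fact 2 = (2::real)" "fact 3 = (6::real)" "fact 4 = (24::real)" "fact 5 = (120::real)"
   "fact 6 = (720::real)"
  by (simp_all add: fact_numeral)

lemma cumulant_4: "cumulant M01 (S n) 4 = mu n 4 - 3 * mu n 2 ^ 2"
proof -
  have q1: "fps_nth (Q n) 1 = mu n 2"
    using Qk[of n 1] by (simp add: fps_mult_nth Q_even Mf_odd Mf0 Mf_nth mu0 numeral_2_eq_2)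
  have "fps_nth (Q n * Mf n) 3 = fps_nth (fps_deriv (Mf n)) 3" by (rule Qk)
  then have "fps_nth (Q n) 3 * 1 + fps_nth (Q n) 1 * (mu n 2 / 2) = 4 * (mu n 4 / 24)"
    unfolding fps_mult_nth sum4 by (simp add: Q_even Mf_odd Mf0 Mf_nth mu0 fact_vals)
  then have q3: "fps_nth (Q n) 3 = mu n 4 / 6 - mu n 2 ^ 2 / 2" using q1 by (simp add: field_simps power2_eq_square)
  show ?thesis using cumulant_Q[of n 3] q3 by (simp add: fact_vals field_simps)
qed

lemma cumulant_6: "cumulant M01 (S n) 6 = mu n 6 - 15 * mu n 4 * mu n 2 + 30 * mu n 2 ^ 3"
proof -
  have q1: "fps_nth (Q n) 1 = mu n 2"
    using Qk[of n 1] by (simp add: fps_mult_nth Q_even Mf_odd Mf0 Mf_nth mu0 numeral_2_eq_2)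
  have "fps_nth (Q n * Mf n) 3 = fps_nth (fps_deriv (Mf n)) 3" by (rule Qk)
  then have "fps_nth (Q n) 3 * 1 + fps_nth (Q n) 1 * (mu n 2 / 2) = 4 * (mu n 4 / 24)"
    unfolding fps_mult_nth sum4 by (simp add: Q_even Mf_odd Mf0 Mf_nth mu0 fact_vals)
  then have q3: "fps_nth (Q n) 3 = mu n 4 / 6 - mu n 2 ^ 2 / 2" using q1 by (simp add: field_simps power2_eq_square)
  have "fps_nth (Q n * Mf n) 5 = fps_nth (fps_deriv (Mf n)) 5" by (rule Qk)
  then have "fps_nth (Q n) 5 * 1 + fps_nth (Q n) 3 * (mu n 2 / 2) + fps_nth (Q n) 1 * (mu n 4 / 24) = 6 * (mu n 6 / 720)"
    unfolding fps_mult_nth sum6 by (simp add: Q_even Mf_odd Mf0 Mf_nth mu0 fact_vals)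
  then have q5: "fps_nth (Q n) 5 = mu n 6 / 120 - (mu n 4 / 6 - mu n 2 ^ 2 / 2) * (mu n 2 / 2) - mu n 2 * (mu n 4 / 24)"
    using q1 q3 by (simp add: field_simps)
  show ?thesis using cumulant_Q[of n 5] q5 by (simp add: fact_vals field_simps power3_eq_cube power2_eq_square)
qed



declare One_nat_def [simp del]

lemma V_eq: "V f j a c a' c' = (if 0 < a then V f (j+2) (a-1) c a' c' + V f j (a-1) c (a'+1) c'
   else if 0 < c then V f (j-2) 0 (c-1) a' c' + V f j 0 (c-1) a' (c'+1)
   else (if even j then f (j div 2) a' c' else 0))"
  by (cases a; cases c) (simp_all add: One_nat_def)

lemma W_eq: "W f r j a c = (if 0 < r then W f (r-1) (j+1) (a+1) c + W f (r-1) (j-1) a (c+1) else f j a c)"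
  by (cases r) (simp_all add: One_nat_def)

lemma L_num: "L (numeral k) j a c = V (L (pred_numeral k)) j a c 0 0"
  by (simp add: numeral_eq_Suc L_Suc)

lemma zero_all: "L n (-9) 0 0 = 0 \<and>
  L n (-8) 0 1 = 0 \<and>
  L n (-7) 0 0 = 0 \<and>
  L n (-7) 0 2 = 0 \<and>
  L n (-7) 1 0 = 0 \<and>
  L n (-6) 0 0 = 0 \<and>
  L n (-6) 0 1 = 0 \<and>
  L n (-6) 0 3 = 0 \<and>
  L n (-6) 0 6 = 0 \<and>
  L n (-6) 1 0 = 0 \<and>
  L n (-5) 0 0 = 0 \<and>
  L n (-5) 0 1 = 0 \<and>
  L n (-5) 0 2 = 0 \<and>
  L n (-5) 0 4 = 0 \<and>
  L n (-5) 1 0 = 0 \<and>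
  L n (-5) 1 1 = 0 \<and>
  L n (-5) 1 2 = 0 \<and>
  L n (-5) 2 0 = 0 \<and>
  L n (-4) 0 0 = 0 \<and>
  L n (-4) 0 1 = 0 \<and>
  L n (-4) 0 2 = 0 \<and>
  L n (-4) 0 3 = 0 \<and>
  L n (-4) 0 4 = 0 \<and>
  L n (-4) 0 5 = 0 \<and>
  L n (-3) 0 0 = 0 \<and>
  L n (-3) 0 1 = 0 \<and>
  L n (-3) 0 2 = 0 \<and>
  L n (-3) 0 3 = 0 \<and>
  L n (-3) 0 4 = 0 \<and>
  L n (-3) 0 6 = 0 \<and>
  L n (-3) 1 0 = 0 \<and>
  L n (-3) 1 1 = 0 \<and>
  L n (-3) 1 2 = 0 \<and>
  L n (-3) 1 3 = 0 \<and>
  L n (-3) 1 4 = 0 \<and>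
  L n (-3) 2 0 = 0 \<and>
  L n (-3) 2 1 = 0 \<and>
  L n (-3) 2 2 = 0 \<and>
  L n (-3) 3 0 = 0 \<and>
  L n (-2) 0 0 = 0 \<and>
  L n (-2) 0 1 = 0 \<and>
  L n (-2) 0 2 = 0 \<and>
  L n (-2) 0 3 = 0 \<and>
  L n (-2) 0 4 = 0 \<and>
  L n (-2) 0 5 = 0 \<and>
  L n (-2) 2 0 = 0 \<and>
  L n (-2) 3 0 = 0 \<and>
  L n (-1) 0 0 = 0 \<and>
  L n (-1) 0 1 = 0 \<and>
  L n (-1) 0 2 = 0 \<and>
  L n (-1) 0 3 = 0 \<and>
  L n (-1) 0 4 = 0 \<and>
  L n (-1) 0 5 = 0 \<and>
  L n (-1) 1 0 = 0 \<and>
  L n (-1) 1 1 = 0 \<and>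
  L n (-1) 1 2 = 0 \<and>
  L n (-1) 1 3 = 0 \<and>
  L n (-1) 1 4 = 0 \<and>
  L n (-1) 1 5 = 0 \<and>
  L n (-1) 2 0 = 0 \<and>
  L n (-1) 2 1 = 0 \<and>
  L n (-1) 2 2 = 0 \<and>
  L n (-1) 2 3 = 0 \<and>
  L n (-1) 2 4 = 0 \<and>
  L n (-1) 3 0 = 0 \<and>
  L n (-1) 3 1 = 0 \<and>
  L n (-1) 3 2 = 0 \<and>
  L n (-1) 4 0 = 0 \<and>
  L n 0 0 1 = 0 \<and>
  L n 0 0 2 = 0 \<and>
  L n 0 0 3 = 0 \<and>
  L n 0 0 4 = 0 \<and>
  L n 0 0 5 = 0 \<and>
  L n 0 1 0 = 0 \<and>
  L n 0 2 0 = 0 \<and>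
  L n 0 3 0 = 0 \<and>
  L n 0 4 0 = 0 \<and>
  L n 0 5 0 = 0 \<and>
  L n 1 0 0 = 0 \<and>
  L n 1 0 1 = 0 \<and>
  L n 1 0 2 = 0 \<and>
  L n 1 0 3 = 0 \<and>
  L n 1 0 4 = 0 \<and>
  L n 1 1 0 = 0 \<and>
  L n 1 1 1 = 0 \<and>
  L n 1 1 2 = 0 \<and>
  L n 1 1 3 = 0 \<and>
  L n 1 2 0 = 0 \<and>
  L n 1 2 1 = 0 \<and>
  L n 1 2 2 = 0 \<and>
  L n 1 2 3 = 0 \<and>
  L n 1 3 0 = 0 \<and>
  L n 1 3 1 = 0 \<and>
  L n 1 3 2 = 0 \<and>
  L n 1 4 0 = 0 \<and>
  L n 1 4 1 = 0 \<and>
  L n 1 4 2 = 0 \<and>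
  L n 1 5 0 = 0 \<and>
  L n 1 5 1 = 0 \<and>
  L n 2 0 0 = 0 \<and>
  L n 2 0 2 = 0 \<and>
  L n 2 0 3 = 0 \<and>
  L n 2 1 0 = 0 \<and>
  L n 2 2 0 = 0 \<and>
  L n 2 3 0 = 0 \<and>
  L n 2 4 0 = 0 \<and>
  L n 2 5 0 = 0 \<and>
  L n 3 0 0 = 0 \<and>
  L n 3 0 1 = 0 \<and>
  L n 3 0 2 = 0 \<and>
  L n 3 0 3 = 0 \<and>
  L n 3 1 0 = 0 \<and>
  L n 3 1 1 = 0 \<and>
  L n 3 1 2 = 0 \<and>
  L n 3 2 0 = 0 \<and>
  L n 3 2 1 = 0 \<and>
  L n 3 2 2 = 0 \<and>
  L n 3 3 0 = 0 \<and>
  L n 3 3 1 = 0 \<and>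
  L n 3 4 0 = 0 \<and>
  L n 3 4 1 = 0 \<and>
  L n 3 6 0 = 0 \<and>
  L n 4 0 0 = 0 \<and>
  L n 4 1 0 = 0 \<and>
  L n 4 2 0 = 0 \<and>
  L n 4 3 0 = 0 \<and>
  L n 4 4 0 = 0 \<and>
  L n 4 5 0 = 0 \<and>
  L n 5 0 0 = 0 \<and>
  L n 5 0 1 = 0 \<and>
  L n 5 0 2 = 0 \<and>
  L n 5 1 0 = 0 \<and>
  L n 5 1 1 = 0 \<and>
  L n 5 2 0 = 0 \<and>
  L n 5 2 1 = 0 \<and>
  L n 5 4 0 = 0 \<and>
  L n 6 0 0 = 0 \<and>
  L n 6 0 1 = 0 \<and>
  L n 6 1 0 = 0 \<and>
  L n 6 3 0 = 0 \<and>
  L n 6 6 0 = 0 \<and>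
  L n 7 0 0 = 0 \<and>
  L n 7 0 1 = 0 \<and>
  L n 7 2 0 = 0 \<and>
  L n 8 1 0 = 0 \<and>
  L n 9 0 0 = 0"
proof (induction n)
  case 0 then show ?case by (simp add: L_0)
next
  case (Suc n) then show ?case by (simp only: L_Suc) (simp add: V_eq)
qed

lemma rec0: "L (Suc n) (-6) 1 1 = L n (-4) 1 0"
  using zero_all[of n] by (simp only: L_Suc) (simp add: V_eq; linarith?)

lemma rec1: "L (Suc n) (-4) 1 0 = L n (-2) 1 0"
  using zero_all[of n] by (simp only: L_Suc) (simp add: V_eq; linarith?)

lemma rec2: "L (Suc n) (-4) 1 1 = L n (-2) 1 1"
  using zero_all[of n] by (simp only: L_Suc) (simp add: V_eq; linarith?)

lemma rec3: "L (Suc n) (-4) 1 2 = L n (-4) 1 0 + L n (-2) 1 2"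
  using zero_all[of n] by (simp only: L_Suc) (simp add: V_eq; linarith?)

lemma rec4: "L (Suc n) (-4) 1 3 = 3 * L n (-4) 1 1 + L n (-2) 1 3"
  using zero_all[of n] by (simp only: L_Suc) (simp add: V_eq; linarith?)

lemma rec5: "L (Suc n) (-4) 1 5 = 5 * L n (-6) 1 1 + 10 * L n (-4) 1 3 + L n (-2) 1 5"
  using zero_all[of n] by (simp only: L_Suc) (simp add: V_eq; linarith?)

lemma rec6: "L (Suc n) (-4) 2 0 = L n 0 0 0"
  using zero_all[of n] by (simp only: L_Suc) (simp add: V_eq; linarith?)

lemma rec7: "L (Suc n) (-4) 2 1 = 2 * L n (-2) 1 0 + L n (-2) 2 1"
  using zero_all[of n] by (simp only: L_Suc) (simp add: V_eq; linarith?)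

lemma rec8: "L (Suc n) (-2) 1 0 = L n 0 0 0"
  using zero_all[of n] by (simp only: L_Suc) (simp add: V_eq; linarith?)

lemma rec9: "L (Suc n) (-2) 1 1 = L n (-2) 1 0"
  using zero_all[of n] by (simp only: L_Suc) (simp add: V_eq; linarith?)

lemma rec10: "L (Suc n) (-2) 1 2 = 2 * L n (-2) 1 1"
  using zero_all[of n] by (simp only: L_Suc) (simp add: V_eq; linarith?)

lemma rec11: "L (Suc n) (-2) 1 3 = L n (-4) 1 0 + 3 * L n (-2) 1 2"
  using zero_all[of n] by (simp only: L_Suc) (simp add: V_eq; linarith?)

lemma rec12: "L (Suc n) (-2) 1 4 = 4 * L n (-4) 1 1 + 4 * L n (-2) 1 3"
  using zero_all[of n] by (simp only: L_Suc) (simp add: V_eq; linarith?)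

lemma rec13: "L (Suc n) (-2) 1 5 = 10 * L n (-4) 1 2 + 5 * L n (-2) 1 4"
  using zero_all[of n] by (simp only: L_Suc) (simp add: V_eq; linarith?)

lemma rec14: "L (Suc n) (-2) 2 1 = L n 0 0 0 + 2 * L n 0 1 1"
  using zero_all[of n] by (simp only: L_Suc) (simp add: V_eq; linarith?)

lemma rec15: "L (Suc n) (-2) 2 2 = 2 * L n (-2) 1 0 + 2 * L n (-2) 2 1 + 2 * L n 0 1 2"
  using zero_all[of n] by (simp only: L_Suc) (simp add: V_eq; linarith?)

lemma rec16: "L (Suc n) (-2) 2 3 = L n (-4) 2 0 + 6 * L n (-2) 1 1 + 3 * L n (-2) 2 2 + 2 * L n 0 1 3"
  using zero_all[of n] by (simp only: L_Suc) (simp add: V_eq; linarith?)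

lemma rec17: "L (Suc n) (-2) 2 4 = 2 * L n (-4) 1 0 + 4 * L n (-4) 2 1 + 12 * L n (-2) 1 2 + 4 * L n (-2) 2 3 + 2 * L n 0 1 4"
  using zero_all[of n] by (simp only: L_Suc) (simp add: V_eq; linarith?)

lemma rec18: "L (Suc n) (-2) 3 1 = 3 * L n 0 2 1 + L n 2 0 1"
  using zero_all[of n] by (simp only: L_Suc) (simp add: V_eq; linarith?)

lemma rec19: "L (Suc n) 0 0 0 = L n 0 0 0"
  using zero_all[of n] by (simp only: L_Suc) (simp add: V_eq; linarith?)

lemma rec20: "L (Suc n) 0 1 1 = L n 0 0 0 + L n 0 1 1"
  using zero_all[of n] by (simp only: L_Suc) (simp add: V_eq; linarith?)

lemma rec21: "L (Suc n) 0 1 2 = L n (-2) 1 0 + L n 0 1 2"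
  using zero_all[of n] by (simp only: L_Suc) (simp add: V_eq; linarith?)

lemma rec22: "L (Suc n) 0 1 3 = 3 * L n (-2) 1 1 + L n 0 1 3"
  using zero_all[of n] by (simp only: L_Suc) (simp add: V_eq; linarith?)

lemma rec23: "L (Suc n) 0 1 4 = L n (-4) 1 0 + 6 * L n (-2) 1 2 + L n 0 1 4"
  using zero_all[of n] by (simp only: L_Suc) (simp add: V_eq; linarith?)

lemma rec24: "L (Suc n) 0 2 1 = L n 0 2 1 + L n 2 0 1"
  using zero_all[of n] by (simp only: L_Suc) (simp add: V_eq; linarith?)

lemma rec25: "L (Suc n) 0 2 2 = L n 0 0 0 + 4 * L n 0 1 1 + L n 0 2 2"
  using zero_all[of n] by (simp only: L_Suc) (simp add: V_eq; linarith?)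

lemma rec26: "L (Suc n) 0 3 1 = L n 0 3 1 + 3 * L n 2 1 1"
  using zero_all[of n] by (simp only: L_Suc) (simp add: V_eq; linarith?)

lemma rec27: "L (Suc n) 0 3 3 = 3 * L n (-2) 3 1 + L n 0 0 0 + 9 * L n 0 1 1 + 9 * L n 0 2 2 + L n 0 3 3 + 3 * L n 2 1 3"
  using zero_all[of n] by (simp only: L_Suc) (simp add: V_eq; linarith?)

lemma rec28: "L (Suc n) 0 4 1 = L n 0 4 1 + 6 * L n 2 2 1 + L n 4 0 1"
  using zero_all[of n] by (simp only: L_Suc) (simp add: V_eq; linarith?)

lemma rec29: "L (Suc n) 2 0 1 = L n 0 0 0"
  using zero_all[of n] by (simp only: L_Suc) (simp add: V_eq; linarith?)

lemma rec30: "L (Suc n) 2 1 1 = L n 2 0 1"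
  using zero_all[of n] by (simp only: L_Suc) (simp add: V_eq; linarith?)

lemma rec31: "L (Suc n) 2 1 2 = L n 0 0 0 + 2 * L n 0 1 1"
  using zero_all[of n] by (simp only: L_Suc) (simp add: V_eq; linarith?)

lemma rec32: "L (Suc n) 2 1 3 = L n (-2) 1 0 + 3 * L n 0 1 2"
  using zero_all[of n] by (simp only: L_Suc) (simp add: V_eq; linarith?)

lemma rec33: "L (Suc n) 2 2 1 = 2 * L n 2 1 1"
  using zero_all[of n] by (simp only: L_Suc) (simp add: V_eq; linarith?)

lemma rec34: "L (Suc n) 2 2 2 = 2 * L n 0 2 1 + 2 * L n 2 0 1 + 2 * L n 2 1 2"
  using zero_all[of n] by (simp only: L_Suc) (simp add: V_eq; linarith?)

lemma rec35: "L (Suc n) 2 3 1 = 3 * L n 2 2 1 + L n 4 0 1"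
  using zero_all[of n] by (simp only: L_Suc) (simp add: V_eq; linarith?)

lemma rec36: "L (Suc n) 2 3 2 = 2 * L n 0 3 1 + 6 * L n 2 1 1 + 3 * L n 2 2 2 + L n 4 0 2"
  using zero_all[of n] by (simp only: L_Suc) (simp add: V_eq; linarith?)

lemma rec37: "L (Suc n) 2 4 1 = 4 * L n 2 3 1 + 4 * L n 4 1 1"
  using zero_all[of n] by (simp only: L_Suc) (simp add: V_eq; linarith?)

lemma rec38: "L (Suc n) 2 4 2 = 2 * L n 0 4 1 + 12 * L n 2 2 1 + 4 * L n 2 3 2 + 2 * L n 4 0 1 + 4 * L n 4 1 2"
  using zero_all[of n] by (simp only: L_Suc) (simp add: V_eq; linarith?)

lemma rec39: "L (Suc n) 2 5 1 = 5 * L n 2 4 1 + 10 * L n 4 2 1"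
  using zero_all[of n] by (simp only: L_Suc) (simp add: V_eq; linarith?)

lemma rec40: "L (Suc n) 4 0 1 = L n 2 0 1"
  using zero_all[of n] by (simp only: L_Suc) (simp add: V_eq; linarith?)

lemma rec41: "L (Suc n) 4 0 2 = L n 0 0 0"
  using zero_all[of n] by (simp only: L_Suc) (simp add: V_eq; linarith?)

lemma rec42: "L (Suc n) 4 1 1 = L n 2 1 1"
  using zero_all[of n] by (simp only: L_Suc) (simp add: V_eq; linarith?)

lemma rec43: "L (Suc n) 4 1 2 = 2 * L n 2 0 1 + L n 2 1 2"
  using zero_all[of n] by (simp only: L_Suc) (simp add: V_eq; linarith?)

lemma rec44: "L (Suc n) 4 2 1 = L n 2 2 1 + L n 4 0 1"
  using zero_all[of n] by (simp only: L_Suc) (simp add: V_eq; linarith?)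

lemma rec45: "L (Suc n) 4 3 1 = L n 2 3 1 + 3 * L n 4 1 1"
  using zero_all[of n] by (simp only: L_Suc) (simp add: V_eq; linarith?)

lemma rec46: "L (Suc n) 4 5 1 = L n 2 5 1 + 10 * L n 4 3 1 + 5 * L n 6 1 1"
  using zero_all[of n] by (simp only: L_Suc) (simp add: V_eq; linarith?)

lemma rec47: "L (Suc n) 6 1 1 = L n 4 0 1"
  using zero_all[of n] by (simp only: L_Suc) (simp add: V_eq; linarith?)

lemmas recs = rec0 rec1 rec2 rec3 rec4 rec5 rec6 rec7 rec8 rec9 rec10 rec11 rec12 rec13 rec14 rec15 rec16 rec17 rec18 rec19 rec20 rec21 rec22 rec23 rec24 rec25 rec26 rec27 rec28 rec29 rec30 rec31 rec32 rec33 rec34 rec35 rec36 rec37 rec38 rec39 rec40 rec41 rec42 rec43 rec44 rec45 rec46 rec47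
lemma lv0_0: "L 0 (-6) 1 1 = 0" by (simp add: L_0)
lemma lv0_1: "L 0 (-4) 1 0 = 0" by (simp add: L_0)
lemma lv0_2: "L 0 (-4) 1 1 = 0" by (simp add: L_0)
lemma lv0_3: "L 0 (-4) 1 2 = 0" by (simp add: L_0)
lemma lv0_4: "L 0 (-4) 1 3 = 0" by (simp add: L_0)
lemma lv0_5: "L 0 (-4) 1 5 = 0" by (simp add: L_0)
lemma lv0_6: "L 0 (-4) 2 0 = 0" by (simp add: L_0)
lemma lv0_7: "L 0 (-4) 2 1 = 0" by (simp add: L_0)
lemma lv0_8: "L 0 (-2) 1 0 = 0" by (simp add: L_0)
lemma lv0_9: "L 0 (-2) 1 1 = 0" by (simp add: L_0)
lemma lv0_10: "L 0 (-2) 1 2 = 0" by (simp add: L_0)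
lemma lv0_11: "L 0 (-2) 1 3 = 0" by (simp add: L_0)
lemma lv0_12: "L 0 (-2) 1 4 = 0" by (simp add: L_0)
lemma lv0_13: "L 0 (-2) 1 5 = 0" by (simp add: L_0)
lemma lv0_14: "L 0 (-2) 2 1 = 0" by (simp add: L_0)
lemma lv0_15: "L 0 (-2) 2 2 = 0" by (simp add: L_0)
lemma lv0_16: "L 0 (-2) 2 3 = 0" by (simp add: L_0)
lemma lv0_17: "L 0 (-2) 2 4 = 0" by (simp add: L_0)
lemma lv0_18: "L 0 (-2) 3 1 = 0" by (simp add: L_0)
lemma lv0_19: "L 0 0 0 0 = 1" by (simp add: L_0)
lemma lv0_20: "L 0 0 1 1 = 0" by (simp add: L_0)
lemma lv0_21: "L 0 0 1 2 = 0" by (simp add: L_0)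
lemma lv0_22: "L 0 0 1 3 = 0" by (simp add: L_0)
lemma lv0_23: "L 0 0 1 4 = 0" by (simp add: L_0)
lemma lv0_24: "L 0 0 2 1 = 0" by (simp add: L_0)
lemma lv0_25: "L 0 0 2 2 = 0" by (simp add: L_0)
lemma lv0_26: "L 0 0 3 1 = 0" by (simp add: L_0)
lemma lv0_27: "L 0 0 3 3 = 0" by (simp add: L_0)
lemma lv0_28: "L 0 0 4 1 = 0" by (simp add: L_0)
lemma lv0_29: "L 0 2 0 1 = 0" by (simp add: L_0)
lemma lv0_30: "L 0 2 1 1 = 0" by (simp add: L_0)
lemma lv0_31: "L 0 2 1 2 = 0" by (simp add: L_0)
lemma lv0_32: "L 0 2 1 3 = 0" by (simp add: L_0)
lemma lv0_33: "L 0 2 2 1 = 0" by (simp add: L_0)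
lemma lv0_34: "L 0 2 2 2 = 0" by (simp add: L_0)
lemma lv0_35: "L 0 2 3 1 = 0" by (simp add: L_0)
lemma lv0_36: "L 0 2 3 2 = 0" by (simp add: L_0)
lemma lv0_37: "L 0 2 4 1 = 0" by (simp add: L_0)
lemma lv0_38: "L 0 2 4 2 = 0" by (simp add: L_0)
lemma lv0_39: "L 0 2 5 1 = 0" by (simp add: L_0)
lemma lv0_40: "L 0 4 0 1 = 0" by (simp add: L_0)
lemma lv0_41: "L 0 4 0 2 = 0" by (simp add: L_0)
lemma lv0_42: "L 0 4 1 1 = 0" by (simp add: L_0)
lemma lv0_43: "L 0 4 1 2 = 0" by (simp add: L_0)
lemma lv0_44: "L 0 4 2 1 = 0" by (simp add: L_0)
lemma lv0_45: "L 0 4 3 1 = 0" by (simp add: L_0)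
lemma lv0_46: "L 0 4 5 1 = 0" by (simp add: L_0)
lemma lv0_47: "L 0 6 1 1 = 0" by (simp add: L_0)
lemma lv1_0: "L 1 (-6) 1 1 = 0" using rec0[of 0] lv0_1 by (simp add: One_nat_def[symmetric])
lemma lv1_1: "L 1 (-4) 1 0 = 0" using rec1[of 0] lv0_8 by (simp add: One_nat_def[symmetric])
lemma lv1_2: "L 1 (-4) 1 1 = 0" using rec2[of 0] lv0_9 by (simp add: One_nat_def[symmetric])
lemma lv1_3: "L 1 (-4) 1 2 = 0" using rec3[of 0] lv0_10 lv0_1 by (simp add: One_nat_def[symmetric])
lemma lv1_4: "L 1 (-4) 1 3 = 0" using rec4[of 0] lv0_11 lv0_2 by (simp add: One_nat_def[symmetric])
lemma lv1_5: "L 1 (-4) 1 5 = 0" using rec5[of 0] lv0_0 lv0_13 lv0_4 by (simp add: One_nat_def[symmetric])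
lemma lv1_6: "L 1 (-4) 2 0 = 1" using rec6[of 0] lv0_19 by (simp add: One_nat_def[symmetric])
lemma lv1_7: "L 1 (-4) 2 1 = 0" using rec7[of 0] lv0_14 lv0_8 by (simp add: One_nat_def[symmetric])
lemma lv1_8: "L 1 (-2) 1 0 = 1" using rec8[of 0] lv0_19 by (simp add: One_nat_def[symmetric])
lemma lv1_9: "L 1 (-2) 1 1 = 0" using rec9[of 0] lv0_8 by (simp add: One_nat_def[symmetric])
lemma lv1_10: "L 1 (-2) 1 2 = 0" using rec10[of 0] lv0_9 by (simp add: One_nat_def[symmetric])
lemma lv1_11: "L 1 (-2) 1 3 = 0" using rec11[of 0] lv0_10 lv0_1 by (simp add: One_nat_def[symmetric])
lemma lv1_12: "L 1 (-2) 1 4 = 0" using rec12[of 0] lv0_11 lv0_2 by (simp add: One_nat_def[symmetric])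
lemma lv1_13: "L 1 (-2) 1 5 = 0" using rec13[of 0] lv0_12 lv0_3 by (simp add: One_nat_def[symmetric])
lemma lv1_14: "L 1 (-2) 2 1 = 1" using rec14[of 0] lv0_19 lv0_20 by (simp add: One_nat_def[symmetric])
lemma lv1_15: "L 1 (-2) 2 2 = 0" using rec15[of 0] lv0_14 lv0_8 lv0_21 by (simp add: One_nat_def[symmetric])
lemma lv1_16: "L 1 (-2) 2 3 = 0" using rec16[of 0] lv0_15 lv0_6 lv0_9 lv0_22 by (simp add: One_nat_def[symmetric])
lemma lv1_17: "L 1 (-2) 2 4 = 0" using rec17[of 0] lv0_10 lv0_1 lv0_23 lv0_16 lv0_7 by (simp add: One_nat_def[symmetric])
lemma lv1_18: "L 1 (-2) 3 1 = 0" using rec18[of 0] lv0_24 lv0_29 by (simp add: One_nat_def[symmetric])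
lemma lv1_19: "L 1 0 0 0 = 1" using rec19[of 0] lv0_19 by (simp add: One_nat_def[symmetric])
lemma lv1_20: "L 1 0 1 1 = 1" using rec20[of 0] lv0_19 lv0_20 by (simp add: One_nat_def[symmetric])
lemma lv1_21: "L 1 0 1 2 = 0" using rec21[of 0] lv0_8 lv0_21 by (simp add: One_nat_def[symmetric])
lemma lv1_22: "L 1 0 1 3 = 0" using rec22[of 0] lv0_9 lv0_22 by (simp add: One_nat_def[symmetric])
lemma lv1_23: "L 1 0 1 4 = 0" using rec23[of 0] lv0_10 lv0_1 lv0_23 by (simp add: One_nat_def[symmetric])
lemma lv1_24: "L 1 0 2 1 = 0" using rec24[of 0] lv0_24 lv0_29 by (simp add: One_nat_def[symmetric])
lemma lv1_25: "L 1 0 2 2 = 1" using rec25[of 0] lv0_19 lv0_25 lv0_20 by (simp add: One_nat_def[symmetric])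
lemma lv1_26: "L 1 0 3 1 = 0" using rec26[of 0] lv0_30 lv0_26 by (simp add: One_nat_def[symmetric])
lemma lv1_27: "L 1 0 3 3 = 1" using rec27[of 0] lv0_19 lv0_32 lv0_18 lv0_27 lv0_25 lv0_20 by (simp add: One_nat_def[symmetric])
lemma lv1_28: "L 1 0 4 1 = 0" using rec28[of 0] lv0_40 lv0_28 lv0_33 by (simp add: One_nat_def[symmetric])
lemma lv1_29: "L 1 2 0 1 = 1" using rec29[of 0] lv0_19 by (simp add: One_nat_def[symmetric])
lemma lv1_30: "L 1 2 1 1 = 0" using rec30[of 0] lv0_29 by (simp add: One_nat_def[symmetric])
lemma lv1_31: "L 1 2 1 2 = 1" using rec31[of 0] lv0_19 lv0_20 by (simp add: One_nat_def[symmetric])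
lemma lv1_32: "L 1 2 1 3 = 0" using rec32[of 0] lv0_8 lv0_21 by (simp add: One_nat_def[symmetric])
lemma lv1_33: "L 1 2 2 1 = 0" using rec33[of 0] lv0_30 by (simp add: One_nat_def[symmetric])
lemma lv1_34: "L 1 2 2 2 = 0" using rec34[of 0] lv0_24 lv0_29 lv0_31 by (simp add: One_nat_def[symmetric])
lemma lv1_35: "L 1 2 3 1 = 0" using rec35[of 0] lv0_40 lv0_33 by (simp add: One_nat_def[symmetric])
lemma lv1_36: "L 1 2 3 2 = 0" using rec36[of 0] lv0_30 lv0_26 lv0_34 lv0_41 by (simp add: One_nat_def[symmetric])
lemma lv1_37: "L 1 2 4 1 = 0" using rec37[of 0] lv0_35 lv0_42 by (simp add: One_nat_def[symmetric])
lemma lv1_38: "L 1 2 4 2 = 0" using rec38[of 0] lv0_28 lv0_40 lv0_36 lv0_43 lv0_33 by (simp add: One_nat_def[symmetric])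
lemma lv1_39: "L 1 2 5 1 = 0" using rec39[of 0] lv0_44 lv0_37 by (simp add: One_nat_def[symmetric])
lemma lv1_40: "L 1 4 0 1 = 0" using rec40[of 0] lv0_29 by (simp add: One_nat_def[symmetric])
lemma lv1_41: "L 1 4 0 2 = 1" using rec41[of 0] lv0_19 by (simp add: One_nat_def[symmetric])
lemma lv1_42: "L 1 4 1 1 = 0" using rec42[of 0] lv0_30 by (simp add: One_nat_def[symmetric])
lemma lv1_43: "L 1 4 1 2 = 0" using rec43[of 0] lv0_29 lv0_31 by (simp add: One_nat_def[symmetric])
lemma lv1_44: "L 1 4 2 1 = 0" using rec44[of 0] lv0_40 lv0_33 by (simp add: One_nat_def[symmetric])
lemma lv1_45: "L 1 4 3 1 = 0" using rec45[of 0] lv0_35 lv0_42 by (simp add: One_nat_def[symmetric])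
lemma lv1_46: "L 1 4 5 1 = 0" using rec46[of 0] lv0_45 lv0_39 lv0_47 by (simp add: One_nat_def[symmetric])
lemma lv1_47: "L 1 6 1 1 = 0" using rec47[of 0] lv0_40 by (simp add: One_nat_def[symmetric])
lemma lv2_0: "L 2 (-6) 1 1 = 0" using rec0[of 1] lv1_1 by (simp add: One_nat_def[symmetric])
lemma lv2_1: "L 2 (-4) 1 0 = 1" using rec1[of 1] lv1_8 by (simp add: One_nat_def[symmetric])
lemma lv2_2: "L 2 (-4) 1 1 = 0" using rec2[of 1] lv1_9 by (simp add: One_nat_def[symmetric])
lemma lv2_3: "L 2 (-4) 1 2 = 0" using rec3[of 1] lv1_10 lv1_1 by (simp add: One_nat_def[symmetric])
lemma lv2_4: "L 2 (-4) 1 3 = 0" using rec4[of 1] lv1_11 lv1_2 by (simp add: One_nat_def[symmetric])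
lemma lv2_5: "L 2 (-4) 1 5 = 0" using rec5[of 1] lv1_0 lv1_13 lv1_4 by (simp add: One_nat_def[symmetric])
lemma lv2_6: "L 2 (-4) 2 0 = 1" using rec6[of 1] lv1_19 by (simp add: One_nat_def[symmetric])
lemma lv2_7: "L 2 (-4) 2 1 = 3" using rec7[of 1] lv1_14 lv1_8 by (simp add: One_nat_def[symmetric])
lemma lv2_8: "L 2 (-2) 1 0 = 1" using rec8[of 1] lv1_19 by (simp add: One_nat_def[symmetric])
lemma lv2_9: "L 2 (-2) 1 1 = 1" using rec9[of 1] lv1_8 by (simp add: One_nat_def[symmetric])
lemma lv2_10: "L 2 (-2) 1 2 = 0" using rec10[of 1] lv1_9 by (simp add: One_nat_def[symmetric])
lemma lv2_11: "L 2 (-2) 1 3 = 0" using rec11[of 1] lv1_10 lv1_1 by (simp add: One_nat_def[symmetric])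
lemma lv2_12: "L 2 (-2) 1 4 = 0" using rec12[of 1] lv1_11 lv1_2 by (simp add: One_nat_def[symmetric])
lemma lv2_13: "L 2 (-2) 1 5 = 0" using rec13[of 1] lv1_12 lv1_3 by (simp add: One_nat_def[symmetric])
lemma lv2_14: "L 2 (-2) 2 1 = 3" using rec14[of 1] lv1_19 lv1_20 by (simp add: One_nat_def[symmetric])
lemma lv2_15: "L 2 (-2) 2 2 = 4" using rec15[of 1] lv1_14 lv1_8 lv1_21 by (simp add: One_nat_def[symmetric])
lemma lv2_16: "L 2 (-2) 2 3 = 1" using rec16[of 1] lv1_15 lv1_6 lv1_9 lv1_22 by (simp add: One_nat_def[symmetric])
lemma lv2_17: "L 2 (-2) 2 4 = 0" using rec17[of 1] lv1_10 lv1_1 lv1_23 lv1_16 lv1_7 by (simp add: One_nat_def[symmetric])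
lemma lv2_18: "L 2 (-2) 3 1 = 1" using rec18[of 1] lv1_24 lv1_29 by (simp add: One_nat_def[symmetric])
lemma lv2_19: "L 2 0 0 0 = 1" using rec19[of 1] lv1_19 by (simp add: One_nat_def[symmetric])
lemma lv2_20: "L 2 0 1 1 = 2" using rec20[of 1] lv1_19 lv1_20 by (simp add: One_nat_def[symmetric])
lemma lv2_21: "L 2 0 1 2 = 1" using rec21[of 1] lv1_8 lv1_21 by (simp add: One_nat_def[symmetric])
lemma lv2_22: "L 2 0 1 3 = 0" using rec22[of 1] lv1_9 lv1_22 by (simp add: One_nat_def[symmetric])
lemma lv2_23: "L 2 0 1 4 = 0" using rec23[of 1] lv1_10 lv1_1 lv1_23 by (simp add: One_nat_def[symmetric])
lemma lv2_24: "L 2 0 2 1 = 1" using rec24[of 1] lv1_24 lv1_29 by (simp add: One_nat_def[symmetric])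
lemma lv2_25: "L 2 0 2 2 = 6" using rec25[of 1] lv1_19 lv1_25 lv1_20 by (simp add: One_nat_def[symmetric])
lemma lv2_26: "L 2 0 3 1 = 0" using rec26[of 1] lv1_30 lv1_26 by (simp add: One_nat_def[symmetric])
lemma lv2_27: "L 2 0 3 3 = 20" using rec27[of 1] lv1_19 lv1_32 lv1_18 lv1_27 lv1_25 lv1_20 by (simp add: One_nat_def[symmetric])
lemma lv2_28: "L 2 0 4 1 = 0" using rec28[of 1] lv1_40 lv1_28 lv1_33 by (simp add: One_nat_def[symmetric])
lemma lv2_29: "L 2 2 0 1 = 1" using rec29[of 1] lv1_19 by (simp add: One_nat_def[symmetric])
lemma lv2_30: "L 2 2 1 1 = 1" using rec30[of 1] lv1_29 by (simp add: One_nat_def[symmetric])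
lemma lv2_31: "L 2 2 1 2 = 3" using rec31[of 1] lv1_19 lv1_20 by (simp add: One_nat_def[symmetric])
lemma lv2_32: "L 2 2 1 3 = 1" using rec32[of 1] lv1_8 lv1_21 by (simp add: One_nat_def[symmetric])
lemma lv2_33: "L 2 2 2 1 = 0" using rec33[of 1] lv1_30 by (simp add: One_nat_def[symmetric])
lemma lv2_34: "L 2 2 2 2 = 4" using rec34[of 1] lv1_24 lv1_29 lv1_31 by (simp add: One_nat_def[symmetric])
lemma lv2_35: "L 2 2 3 1 = 0" using rec35[of 1] lv1_40 lv1_33 by (simp add: One_nat_def[symmetric])
lemma lv2_36: "L 2 2 3 2 = 1" using rec36[of 1] lv1_30 lv1_26 lv1_34 lv1_41 by (simp add: One_nat_def[symmetric])
lemma lv2_37: "L 2 2 4 1 = 0" using rec37[of 1] lv1_35 lv1_42 by (simp add: One_nat_def[symmetric])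
lemma lv2_38: "L 2 2 4 2 = 0" using rec38[of 1] lv1_28 lv1_40 lv1_36 lv1_43 lv1_33 by (simp add: One_nat_def[symmetric])
lemma lv2_39: "L 2 2 5 1 = 0" using rec39[of 1] lv1_44 lv1_37 by (simp add: One_nat_def[symmetric])
lemma lv2_40: "L 2 4 0 1 = 1" using rec40[of 1] lv1_29 by (simp add: One_nat_def[symmetric])
lemma lv2_41: "L 2 4 0 2 = 1" using rec41[of 1] lv1_19 by (simp add: One_nat_def[symmetric])
lemma lv2_42: "L 2 4 1 1 = 0" using rec42[of 1] lv1_30 by (simp add: One_nat_def[symmetric])
lemma lv2_43: "L 2 4 1 2 = 3" using rec43[of 1] lv1_29 lv1_31 by (simp add: One_nat_def[symmetric])
lemma lv2_44: "L 2 4 2 1 = 0" using rec44[of 1] lv1_40 lv1_33 by (simp add: One_nat_def[symmetric])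
lemma lv2_45: "L 2 4 3 1 = 0" using rec45[of 1] lv1_35 lv1_42 by (simp add: One_nat_def[symmetric])
lemma lv2_46: "L 2 4 5 1 = 0" using rec46[of 1] lv1_45 lv1_39 lv1_47 by (simp add: One_nat_def[symmetric])
lemma lv2_47: "L 2 6 1 1 = 0" using rec47[of 1] lv1_40 by (simp add: One_nat_def[symmetric])
lemma lv3_0: "L 3 (-6) 1 1 = 1" using rec0[of 2] lv2_1 by (simp add: One_nat_def[symmetric])
lemma lv3_1: "L 3 (-4) 1 0 = 1" using rec1[of 2] lv2_8 by (simp add: One_nat_def[symmetric])
lemma lv3_2: "L 3 (-4) 1 1 = 1" using rec2[of 2] lv2_9 by (simp add: One_nat_def[symmetric])
lemma lv3_3: "L 3 (-4) 1 2 = 1" using rec3[of 2] lv2_10 lv2_1 by (simp add: One_nat_def[symmetric])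
lemma lv3_4: "L 3 (-4) 1 3 = 0" using rec4[of 2] lv2_11 lv2_2 by (simp add: One_nat_def[symmetric])
lemma lv3_5: "L 3 (-4) 1 5 = 0" using rec5[of 2] lv2_0 lv2_13 lv2_4 by (simp add: One_nat_def[symmetric])
lemma lv3_6: "L 3 (-4) 2 0 = 1" using rec6[of 2] lv2_19 by (simp add: One_nat_def[symmetric])
lemma lv3_7: "L 3 (-4) 2 1 = 5" using rec7[of 2] lv2_14 lv2_8 by (simp add: One_nat_def[symmetric])
lemma lv3_8: "L 3 (-2) 1 0 = 1" using rec8[of 2] lv2_19 by (simp add: One_nat_def[symmetric])
lemma lv3_9: "L 3 (-2) 1 1 = 1" using rec9[of 2] lv2_8 by (simp add: One_nat_def[symmetric])
lemma lv3_10: "L 3 (-2) 1 2 = 2" using rec10[of 2] lv2_9 by (simp add: One_nat_def[symmetric])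
lemma lv3_11: "L 3 (-2) 1 3 = 1" using rec11[of 2] lv2_10 lv2_1 by (simp add: One_nat_def[symmetric])
lemma lv3_12: "L 3 (-2) 1 4 = 0" using rec12[of 2] lv2_11 lv2_2 by (simp add: One_nat_def[symmetric])
lemma lv3_13: "L 3 (-2) 1 5 = 0" using rec13[of 2] lv2_12 lv2_3 by (simp add: One_nat_def[symmetric])
lemma lv3_14: "L 3 (-2) 2 1 = 5" using rec14[of 2] lv2_19 lv2_20 by (simp add: One_nat_def[symmetric])
lemma lv3_15: "L 3 (-2) 2 2 = 10" using rec15[of 2] lv2_14 lv2_8 lv2_21 by (simp add: One_nat_def[symmetric])
lemma lv3_16: "L 3 (-2) 2 3 = 19" using rec16[of 2] lv2_15 lv2_6 lv2_9 lv2_22 by (simp add: One_nat_def[symmetric])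
lemma lv3_17: "L 3 (-2) 2 4 = 18" using rec17[of 2] lv2_10 lv2_1 lv2_23 lv2_16 lv2_7 by (simp add: One_nat_def[symmetric])
lemma lv3_18: "L 3 (-2) 3 1 = 4" using rec18[of 2] lv2_24 lv2_29 by (simp add: One_nat_def[symmetric])
lemma lv3_19: "L 3 0 0 0 = 1" using rec19[of 2] lv2_19 by (simp add: One_nat_def[symmetric])
lemma lv3_20: "L 3 0 1 1 = 3" using rec20[of 2] lv2_19 lv2_20 by (simp add: One_nat_def[symmetric])
lemma lv3_21: "L 3 0 1 2 = 2" using rec21[of 2] lv2_8 lv2_21 by (simp add: One_nat_def[symmetric])
lemma lv3_22: "L 3 0 1 3 = 3" using rec22[of 2] lv2_9 lv2_22 by (simp add: One_nat_def[symmetric])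
lemma lv3_23: "L 3 0 1 4 = 1" using rec23[of 2] lv2_10 lv2_1 lv2_23 by (simp add: One_nat_def[symmetric])
lemma lv3_24: "L 3 0 2 1 = 2" using rec24[of 2] lv2_24 lv2_29 by (simp add: One_nat_def[symmetric])
lemma lv3_25: "L 3 0 2 2 = 15" using rec25[of 2] lv2_19 lv2_25 lv2_20 by (simp add: One_nat_def[symmetric])
lemma lv3_26: "L 3 0 3 1 = 3" using rec26[of 2] lv2_30 lv2_26 by (simp add: One_nat_def[symmetric])
lemma lv3_27: "L 3 0 3 3 = 99" using rec27[of 2] lv2_19 lv2_32 lv2_18 lv2_27 lv2_25 lv2_20 by (simp add: One_nat_def[symmetric])
lemma lv3_28: "L 3 0 4 1 = 1" using rec28[of 2] lv2_40 lv2_28 lv2_33 by (simp add: One_nat_def[symmetric])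
lemma lv3_29: "L 3 2 0 1 = 1" using rec29[of 2] lv2_19 by (simp add: One_nat_def[symmetric])
lemma lv3_30: "L 3 2 1 1 = 1" using rec30[of 2] lv2_29 by (simp add: One_nat_def[symmetric])
lemma lv3_31: "L 3 2 1 2 = 5" using rec31[of 2] lv2_19 lv2_20 by (simp add: One_nat_def[symmetric])
lemma lv3_32: "L 3 2 1 3 = 4" using rec32[of 2] lv2_8 lv2_21 by (simp add: One_nat_def[symmetric])
lemma lv3_33: "L 3 2 2 1 = 2" using rec33[of 2] lv2_30 by (simp add: One_nat_def[symmetric])
lemma lv3_34: "L 3 2 2 2 = 10" using rec34[of 2] lv2_24 lv2_29 lv2_31 by (simp add: One_nat_def[symmetric])
lemma lv3_35: "L 3 2 3 1 = 1" using rec35[of 2] lv2_40 lv2_33 by (simp add: One_nat_def[symmetric])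
lemma lv3_36: "L 3 2 3 2 = 19" using rec36[of 2] lv2_30 lv2_26 lv2_34 lv2_41 by (simp add: One_nat_def[symmetric])
lemma lv3_37: "L 3 2 4 1 = 0" using rec37[of 2] lv2_35 lv2_42 by (simp add: One_nat_def[symmetric])
lemma lv3_38: "L 3 2 4 2 = 18" using rec38[of 2] lv2_28 lv2_40 lv2_36 lv2_43 lv2_33 by (simp add: One_nat_def[symmetric])
lemma lv3_39: "L 3 2 5 1 = 0" using rec39[of 2] lv2_44 lv2_37 by (simp add: One_nat_def[symmetric])
lemma lv3_40: "L 3 4 0 1 = 1" using rec40[of 2] lv2_29 by (simp add: One_nat_def[symmetric])
lemma lv3_41: "L 3 4 0 2 = 1" using rec41[of 2] lv2_19 by (simp add: One_nat_def[symmetric])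
lemma lv3_42: "L 3 4 1 1 = 1" using rec42[of 2] lv2_30 by (simp add: One_nat_def[symmetric])
lemma lv3_43: "L 3 4 1 2 = 5" using rec43[of 2] lv2_29 lv2_31 by (simp add: One_nat_def[symmetric])
lemma lv3_44: "L 3 4 2 1 = 1" using rec44[of 2] lv2_40 lv2_33 by (simp add: One_nat_def[symmetric])
lemma lv3_45: "L 3 4 3 1 = 0" using rec45[of 2] lv2_35 lv2_42 by (simp add: One_nat_def[symmetric])
lemma lv3_46: "L 3 4 5 1 = 0" using rec46[of 2] lv2_45 lv2_39 lv2_47 by (simp add: One_nat_def[symmetric])
lemma lv3_47: "L 3 6 1 1 = 1" using rec47[of 2] lv2_40 by (simp add: One_nat_def[symmetric])
lemma lv4_0: "L 4 (-6) 1 1 = 1" using rec0[of 3] lv3_1 by (simp add: One_nat_def[symmetric])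
lemma lv4_1: "L 4 (-4) 1 0 = 1" using rec1[of 3] lv3_8 by (simp add: One_nat_def[symmetric])
lemma lv4_2: "L 4 (-4) 1 1 = 1" using rec2[of 3] lv3_9 by (simp add: One_nat_def[symmetric])
lemma lv4_3: "L 4 (-4) 1 2 = 3" using rec3[of 3] lv3_10 lv3_1 by (simp add: One_nat_def[symmetric])
lemma lv4_4: "L 4 (-4) 1 3 = 4" using rec4[of 3] lv3_11 lv3_2 by (simp add: One_nat_def[symmetric])
lemma lv4_5: "L 4 (-4) 1 5 = 5" using rec5[of 3] lv3_0 lv3_13 lv3_4 by (simp add: One_nat_def[symmetric])
lemma lv4_6: "L 4 (-4) 2 0 = 1" using rec6[of 3] lv3_19 by (simp add: One_nat_def[symmetric])
lemma lv4_7: "L 4 (-4) 2 1 = 7" using rec7[of 3] lv3_14 lv3_8 by (simp add: One_nat_def[symmetric])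
lemma lv4_8: "L 4 (-2) 1 0 = 1" using rec8[of 3] lv3_19 by (simp add: One_nat_def[symmetric])
lemma lv4_9: "L 4 (-2) 1 1 = 1" using rec9[of 3] lv3_8 by (simp add: One_nat_def[symmetric])
lemma lv4_10: "L 4 (-2) 1 2 = 2" using rec10[of 3] lv3_9 by (simp add: One_nat_def[symmetric])
lemma lv4_11: "L 4 (-2) 1 3 = 7" using rec11[of 3] lv3_10 lv3_1 by (simp add: One_nat_def[symmetric])
lemma lv4_12: "L 4 (-2) 1 4 = 8" using rec12[of 3] lv3_11 lv3_2 by (simp add: One_nat_def[symmetric])
lemma lv4_13: "L 4 (-2) 1 5 = 10" using rec13[of 3] lv3_12 lv3_3 by (simp add: One_nat_def[symmetric])
lemma lv4_14: "L 4 (-2) 2 1 = 7" using rec14[of 3] lv3_19 lv3_20 by (simp add: One_nat_def[symmetric])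
lemma lv4_15: "L 4 (-2) 2 2 = 16" using rec15[of 3] lv3_14 lv3_8 lv3_21 by (simp add: One_nat_def[symmetric])
lemma lv4_16: "L 4 (-2) 2 3 = 43" using rec16[of 3] lv3_15 lv3_6 lv3_9 lv3_22 by (simp add: One_nat_def[symmetric])
lemma lv4_17: "L 4 (-2) 2 4 = 124" using rec17[of 3] lv3_10 lv3_1 lv3_23 lv3_16 lv3_7 by (simp add: One_nat_def[symmetric])
lemma lv4_18: "L 4 (-2) 3 1 = 7" using rec18[of 3] lv3_24 lv3_29 by (simp add: One_nat_def[symmetric])
lemma lv4_19: "L 4 0 0 0 = 1" using rec19[of 3] lv3_19 by (simp add: One_nat_def[symmetric])
lemma lv4_20: "L 4 0 1 1 = 4" using rec20[of 3] lv3_19 lv3_20 by (simp add: One_nat_def[symmetric])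
lemma lv4_21: "L 4 0 1 2 = 3" using rec21[of 3] lv3_8 lv3_21 by (simp add: One_nat_def[symmetric])
lemma lv4_22: "L 4 0 1 3 = 6" using rec22[of 3] lv3_9 lv3_22 by (simp add: One_nat_def[symmetric])
lemma lv4_23: "L 4 0 1 4 = 14" using rec23[of 3] lv3_10 lv3_1 lv3_23 by (simp add: One_nat_def[symmetric])
lemma lv4_24: "L 4 0 2 1 = 3" using rec24[of 3] lv3_24 lv3_29 by (simp add: One_nat_def[symmetric])
lemma lv4_25: "L 4 0 2 2 = 28" using rec25[of 3] lv3_19 lv3_25 lv3_20 by (simp add: One_nat_def[symmetric])
lemma lv4_26: "L 4 0 3 1 = 6" using rec26[of 3] lv3_30 lv3_26 by (simp add: One_nat_def[symmetric])
lemma lv4_27: "L 4 0 3 3 = 286" using rec27[of 3] lv3_19 lv3_32 lv3_18 lv3_27 lv3_25 lv3_20 by (simp add: One_nat_def[symmetric])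
lemma lv4_28: "L 4 0 4 1 = 14" using rec28[of 3] lv3_40 lv3_28 lv3_33 by (simp add: One_nat_def[symmetric])
lemma lv4_29: "L 4 2 0 1 = 1" using rec29[of 3] lv3_19 by (simp add: One_nat_def[symmetric])
lemma lv4_30: "L 4 2 1 1 = 1" using rec30[of 3] lv3_29 by (simp add: One_nat_def[symmetric])
lemma lv4_31: "L 4 2 1 2 = 7" using rec31[of 3] lv3_19 lv3_20 by (simp add: One_nat_def[symmetric])
lemma lv4_32: "L 4 2 1 3 = 7" using rec32[of 3] lv3_8 lv3_21 by (simp add: One_nat_def[symmetric])
lemma lv4_33: "L 4 2 2 1 = 2" using rec33[of 3] lv3_30 by (simp add: One_nat_def[symmetric])
lemma lv4_34: "L 4 2 2 2 = 16" using rec34[of 3] lv3_24 lv3_29 lv3_31 by (simp add: One_nat_def[symmetric])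
lemma lv4_35: "L 4 2 3 1 = 7" using rec35[of 3] lv3_40 lv3_33 by (simp add: One_nat_def[symmetric])
lemma lv4_36: "L 4 2 3 2 = 43" using rec36[of 3] lv3_30 lv3_26 lv3_34 lv3_41 by (simp add: One_nat_def[symmetric])
lemma lv4_37: "L 4 2 4 1 = 8" using rec37[of 3] lv3_35 lv3_42 by (simp add: One_nat_def[symmetric])
lemma lv4_38: "L 4 2 4 2 = 124" using rec38[of 3] lv3_28 lv3_40 lv3_36 lv3_43 lv3_33 by (simp add: One_nat_def[symmetric])
lemma lv4_39: "L 4 2 5 1 = 10" using rec39[of 3] lv3_44 lv3_37 by (simp add: One_nat_def[symmetric])
lemma lv4_40: "L 4 4 0 1 = 1" using rec40[of 3] lv3_29 by (simp add: One_nat_def[symmetric])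
lemma lv4_41: "L 4 4 0 2 = 1" using rec41[of 3] lv3_19 by (simp add: One_nat_def[symmetric])
lemma lv4_42: "L 4 4 1 1 = 1" using rec42[of 3] lv3_30 by (simp add: One_nat_def[symmetric])
lemma lv4_43: "L 4 4 1 2 = 7" using rec43[of 3] lv3_29 lv3_31 by (simp add: One_nat_def[symmetric])
lemma lv4_44: "L 4 4 2 1 = 3" using rec44[of 3] lv3_40 lv3_33 by (simp add: One_nat_def[symmetric])
lemma lv4_45: "L 4 4 3 1 = 4" using rec45[of 3] lv3_35 lv3_42 by (simp add: One_nat_def[symmetric])
lemma lv4_46: "L 4 4 5 1 = 5" using rec46[of 3] lv3_45 lv3_39 lv3_47 by (simp add: One_nat_def[symmetric])
lemma lv4_47: "L 4 6 1 1 = 1" using rec47[of 3] lv3_40 by (simp add: One_nat_def[symmetric])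
lemma lv5_0: "L 5 (-6) 1 1 = 1" using rec0[of 4] lv4_1 by (simp add: One_nat_def[symmetric])
lemma lv5_1: "L 5 (-4) 1 0 = 1" using rec1[of 4] lv4_8 by (simp add: One_nat_def[symmetric])
lemma lv5_2: "L 5 (-4) 1 1 = 1" using rec2[of 4] lv4_9 by (simp add: One_nat_def[symmetric])
lemma lv5_3: "L 5 (-4) 1 2 = 3" using rec3[of 4] lv4_10 lv4_1 by (simp add: One_nat_def[symmetric])
lemma lv5_4: "L 5 (-4) 1 3 = 10" using rec4[of 4] lv4_11 lv4_2 by (simp add: One_nat_def[symmetric])
lemma lv5_5: "L 5 (-4) 1 5 = 55" using rec5[of 4] lv4_0 lv4_13 lv4_4 by (simp add: One_nat_def[symmetric])
lemma lv5_6: "L 5 (-4) 2 0 = 1" using rec6[of 4] lv4_19 by (simp add: One_nat_def[symmetric])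
lemma lv5_7: "L 5 (-4) 2 1 = 9" using rec7[of 4] lv4_14 lv4_8 by (simp add: One_nat_def[symmetric])
lemma lv5_8: "L 5 (-2) 1 0 = 1" using rec8[of 4] lv4_19 by (simp add: One_nat_def[symmetric])
lemma lv5_9: "L 5 (-2) 1 1 = 1" using rec9[of 4] lv4_8 by (simp add: One_nat_def[symmetric])
lemma lv5_10: "L 5 (-2) 1 2 = 2" using rec10[of 4] lv4_9 by (simp add: One_nat_def[symmetric])
lemma lv5_11: "L 5 (-2) 1 3 = 7" using rec11[of 4] lv4_10 lv4_1 by (simp add: One_nat_def[symmetric])
lemma lv5_12: "L 5 (-2) 1 4 = 32" using rec12[of 4] lv4_11 lv4_2 by (simp add: One_nat_def[symmetric])
lemma lv5_13: "L 5 (-2) 1 5 = 70" using rec13[of 4] lv4_12 lv4_3 by (simp add: One_nat_def[symmetric])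
lemma lv5_14: "L 5 (-2) 2 1 = 9" using rec14[of 4] lv4_19 lv4_20 by (simp add: One_nat_def[symmetric])
lemma lv5_15: "L 5 (-2) 2 2 = 22" using rec15[of 4] lv4_14 lv4_8 lv4_21 by (simp add: One_nat_def[symmetric])
lemma lv5_16: "L 5 (-2) 2 3 = 67" using rec16[of 4] lv4_15 lv4_6 lv4_9 lv4_22 by (simp add: One_nat_def[symmetric])
lemma lv5_17: "L 5 (-2) 2 4 = 254" using rec17[of 4] lv4_10 lv4_1 lv4_23 lv4_16 lv4_7 by (simp add: One_nat_def[symmetric])
lemma lv5_18: "L 5 (-2) 3 1 = 10" using rec18[of 4] lv4_24 lv4_29 by (simp add: One_nat_def[symmetric])
lemma lv5_19: "L 5 0 0 0 = 1" using rec19[of 4] lv4_19 by (simp add: One_nat_def[symmetric])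
lemma lv5_20: "L 5 0 1 1 = 5" using rec20[of 4] lv4_19 lv4_20 by (simp add: One_nat_def[symmetric])
lemma lv5_21: "L 5 0 1 2 = 4" using rec21[of 4] lv4_8 lv4_21 by (simp add: One_nat_def[symmetric])
lemma lv5_22: "L 5 0 1 3 = 9" using rec22[of 4] lv4_9 lv4_22 by (simp add: One_nat_def[symmetric])
lemma lv5_23: "L 5 0 1 4 = 27" using rec23[of 4] lv4_10 lv4_1 lv4_23 by (simp add: One_nat_def[symmetric])
lemma lv5_24: "L 5 0 2 1 = 4" using rec24[of 4] lv4_24 lv4_29 by (simp add: One_nat_def[symmetric])
lemma lv5_25: "L 5 0 2 2 = 45" using rec25[of 4] lv4_19 lv4_25 lv4_20 by (simp add: One_nat_def[symmetric])
lemma lv5_26: "L 5 0 3 1 = 9" using rec26[of 4] lv4_30 lv4_26 by (simp add: One_nat_def[symmetric])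
lemma lv5_27: "L 5 0 3 3 = 617" using rec27[of 4] lv4_19 lv4_32 lv4_18 lv4_27 lv4_25 lv4_20 by (simp add: One_nat_def[symmetric])
lemma lv5_28: "L 5 0 4 1 = 27" using rec28[of 4] lv4_40 lv4_28 lv4_33 by (simp add: One_nat_def[symmetric])
lemma lv5_29: "L 5 2 0 1 = 1" using rec29[of 4] lv4_19 by (simp add: One_nat_def[symmetric])
lemma lv5_30: "L 5 2 1 1 = 1" using rec30[of 4] lv4_29 by (simp add: One_nat_def[symmetric])
lemma lv5_31: "L 5 2 1 2 = 9" using rec31[of 4] lv4_19 lv4_20 by (simp add: One_nat_def[symmetric])
lemma lv5_32: "L 5 2 1 3 = 10" using rec32[of 4] lv4_8 lv4_21 by (simp add: One_nat_def[symmetric])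
lemma lv5_33: "L 5 2 2 1 = 2" using rec33[of 4] lv4_30 by (simp add: One_nat_def[symmetric])
lemma lv5_34: "L 5 2 2 2 = 22" using rec34[of 4] lv4_24 lv4_29 lv4_31 by (simp add: One_nat_def[symmetric])
lemma lv5_35: "L 5 2 3 1 = 7" using rec35[of 4] lv4_40 lv4_33 by (simp add: One_nat_def[symmetric])
lemma lv5_36: "L 5 2 3 2 = 67" using rec36[of 4] lv4_30 lv4_26 lv4_34 lv4_41 by (simp add: One_nat_def[symmetric])
lemma lv5_37: "L 5 2 4 1 = 32" using rec37[of 4] lv4_35 lv4_42 by (simp add: One_nat_def[symmetric])
lemma lv5_38: "L 5 2 4 2 = 254" using rec38[of 4] lv4_28 lv4_40 lv4_36 lv4_43 lv4_33 by (simp add: One_nat_def[symmetric])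
lemma lv5_39: "L 5 2 5 1 = 70" using rec39[of 4] lv4_44 lv4_37 by (simp add: One_nat_def[symmetric])
lemma lv5_40: "L 5 4 0 1 = 1" using rec40[of 4] lv4_29 by (simp add: One_nat_def[symmetric])
lemma lv5_41: "L 5 4 0 2 = 1" using rec41[of 4] lv4_19 by (simp add: One_nat_def[symmetric])
lemma lv5_42: "L 5 4 1 1 = 1" using rec42[of 4] lv4_30 by (simp add: One_nat_def[symmetric])
lemma lv5_43: "L 5 4 1 2 = 9" using rec43[of 4] lv4_29 lv4_31 by (simp add: One_nat_def[symmetric])
lemma lv5_44: "L 5 4 2 1 = 3" using rec44[of 4] lv4_40 lv4_33 by (simp add: One_nat_def[symmetric])
lemma lv5_45: "L 5 4 3 1 = 10" using rec45[of 4] lv4_35 lv4_42 by (simp add: One_nat_def[symmetric])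
lemma lv5_46: "L 5 4 5 1 = 55" using rec46[of 4] lv4_45 lv4_39 lv4_47 by (simp add: One_nat_def[symmetric])
lemma lv5_47: "L 5 6 1 1 = 1" using rec47[of 4] lv4_40 by (simp add: One_nat_def[symmetric])
lemma lv6_0: "L 6 (-6) 1 1 = 1" using rec0[of 5] lv5_1 by (simp add: One_nat_def[symmetric])
lemma lv6_1: "L 6 (-4) 1 0 = 1" using rec1[of 5] lv5_8 by (simp add: One_nat_def[symmetric])
lemma lv6_2: "L 6 (-4) 1 1 = 1" using rec2[of 5] lv5_9 by (simp add: One_nat_def[symmetric])
lemma lv6_3: "L 6 (-4) 1 2 = 3" using rec3[of 5] lv5_10 lv5_1 by (simp add: One_nat_def[symmetric])
lemma lv6_4: "L 6 (-4) 1 3 = 10" using rec4[of 5] lv5_11 lv5_2 by (simp add: One_nat_def[symmetric])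
lemma lv6_5: "L 6 (-4) 1 5 = 175" using rec5[of 5] lv5_0 lv5_13 lv5_4 by (simp add: One_nat_def[symmetric])
lemma lv6_6: "L 6 (-4) 2 0 = 1" using rec6[of 5] lv5_19 by (simp add: One_nat_def[symmetric])
lemma lv6_7: "L 6 (-4) 2 1 = 11" using rec7[of 5] lv5_14 lv5_8 by (simp add: One_nat_def[symmetric])
lemma lv6_8: "L 6 (-2) 1 0 = 1" using rec8[of 5] lv5_19 by (simp add: One_nat_def[symmetric])
lemma lv6_9: "L 6 (-2) 1 1 = 1" using rec9[of 5] lv5_8 by (simp add: One_nat_def[symmetric])
lemma lv6_10: "L 6 (-2) 1 2 = 2" using rec10[of 5] lv5_9 by (simp add: One_nat_def[symmetric])
lemma lv6_11: "L 6 (-2) 1 3 = 7" using rec11[of 5] lv5_10 lv5_1 by (simp add: One_nat_def[symmetric])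
lemma lv6_12: "L 6 (-2) 1 4 = 32" using rec12[of 5] lv5_11 lv5_2 by (simp add: One_nat_def[symmetric])
lemma lv6_13: "L 6 (-2) 1 5 = 190" using rec13[of 5] lv5_12 lv5_3 by (simp add: One_nat_def[symmetric])
lemma lv6_14: "L 6 (-2) 2 1 = 11" using rec14[of 5] lv5_19 lv5_20 by (simp add: One_nat_def[symmetric])
lemma lv6_15: "L 6 (-2) 2 2 = 28" using rec15[of 5] lv5_14 lv5_8 lv5_21 by (simp add: One_nat_def[symmetric])
lemma lv6_16: "L 6 (-2) 2 3 = 91" using rec16[of 5] lv5_15 lv5_6 lv5_9 lv5_22 by (simp add: One_nat_def[symmetric])
lemma lv6_17: "L 6 (-2) 2 4 = 384" using rec17[of 5] lv5_10 lv5_1 lv5_23 lv5_16 lv5_7 by (simp add: One_nat_def[symmetric])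
lemma lv6_18: "L 6 (-2) 3 1 = 13" using rec18[of 5] lv5_24 lv5_29 by (simp add: One_nat_def[symmetric])
lemma lv6_19: "L 6 0 0 0 = 1" using rec19[of 5] lv5_19 by (simp add: One_nat_def[symmetric])
lemma lv6_20: "L 6 0 1 1 = 6" using rec20[of 5] lv5_19 lv5_20 by (simp add: One_nat_def[symmetric])
lemma lv6_21: "L 6 0 1 2 = 5" using rec21[of 5] lv5_8 lv5_21 by (simp add: One_nat_def[symmetric])
lemma lv6_22: "L 6 0 1 3 = 12" using rec22[of 5] lv5_9 lv5_22 by (simp add: One_nat_def[symmetric])
lemma lv6_23: "L 6 0 1 4 = 40" using rec23[of 5] lv5_10 lv5_1 lv5_23 by (simp add: One_nat_def[symmetric])
lemma lv6_24: "L 6 0 2 1 = 5" using rec24[of 5] lv5_24 lv5_29 by (simp add: One_nat_def[symmetric])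
lemma lv6_25: "L 6 0 2 2 = 66" using rec25[of 5] lv5_19 lv5_25 lv5_20 by (simp add: One_nat_def[symmetric])
lemma lv6_26: "L 6 0 3 1 = 12" using rec26[of 5] lv5_30 lv5_26 by (simp add: One_nat_def[symmetric])
lemma lv6_27: "L 6 0 3 3 = 1128" using rec27[of 5] lv5_19 lv5_32 lv5_18 lv5_27 lv5_25 lv5_20 by (simp add: One_nat_def[symmetric])
lemma lv6_28: "L 6 0 4 1 = 40" using rec28[of 5] lv5_40 lv5_28 lv5_33 by (simp add: One_nat_def[symmetric])
lemma lv6_29: "L 6 2 0 1 = 1" using rec29[of 5] lv5_19 by (simp add: One_nat_def[symmetric])
lemma lv6_30: "L 6 2 1 1 = 1" using rec30[of 5] lv5_29 by (simp add: One_nat_def[symmetric])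
lemma lv6_31: "L 6 2 1 2 = 11" using rec31[of 5] lv5_19 lv5_20 by (simp add: One_nat_def[symmetric])
lemma lv6_32: "L 6 2 1 3 = 13" using rec32[of 5] lv5_8 lv5_21 by (simp add: One_nat_def[symmetric])
lemma lv6_33: "L 6 2 2 1 = 2" using rec33[of 5] lv5_30 by (simp add: One_nat_def[symmetric])
lemma lv6_34: "L 6 2 2 2 = 28" using rec34[of 5] lv5_24 lv5_29 lv5_31 by (simp add: One_nat_def[symmetric])
lemma lv6_35: "L 6 2 3 1 = 7" using rec35[of 5] lv5_40 lv5_33 by (simp add: One_nat_def[symmetric])
lemma lv6_36: "L 6 2 3 2 = 91" using rec36[of 5] lv5_30 lv5_26 lv5_34 lv5_41 by (simp add: One_nat_def[symmetric])
lemma lv6_37: "L 6 2 4 1 = 32" using rec37[of 5] lv5_35 lv5_42 by (simp add: One_nat_def[symmetric])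
lemma lv6_38: "L 6 2 4 2 = 384" using rec38[of 5] lv5_28 lv5_40 lv5_36 lv5_43 lv5_33 by (simp add: One_nat_def[symmetric])
lemma lv6_39: "L 6 2 5 1 = 190" using rec39[of 5] lv5_44 lv5_37 by (simp add: One_nat_def[symmetric])
lemma lv6_40: "L 6 4 0 1 = 1" using rec40[of 5] lv5_29 by (simp add: One_nat_def[symmetric])
lemma lv6_41: "L 6 4 0 2 = 1" using rec41[of 5] lv5_19 by (simp add: One_nat_def[symmetric])
lemma lv6_42: "L 6 4 1 1 = 1" using rec42[of 5] lv5_30 by (simp add: One_nat_def[symmetric])
lemma lv6_43: "L 6 4 1 2 = 11" using rec43[of 5] lv5_29 lv5_31 by (simp add: One_nat_def[symmetric])
lemma lv6_44: "L 6 4 2 1 = 3" using rec44[of 5] lv5_40 lv5_33 by (simp add: One_nat_def[symmetric])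
lemma lv6_45: "L 6 4 3 1 = 10" using rec45[of 5] lv5_35 lv5_42 by (simp add: One_nat_def[symmetric])
lemma lv6_46: "L 6 4 5 1 = 175" using rec46[of 5] lv5_45 lv5_39 lv5_47 by (simp add: One_nat_def[symmetric])
lemma lv6_47: "L 6 6 1 1 = 1" using rec47[of 5] lv5_40 by (simp add: One_nat_def[symmetric])
lemma lv7_0: "L 7 (-6) 1 1 = 1" using rec0[of 6] lv6_1 by (simp add: One_nat_def[symmetric])
lemma lv7_1: "L 7 (-4) 1 0 = 1" using rec1[of 6] lv6_8 by (simp add: One_nat_def[symmetric])
lemma lv7_2: "L 7 (-4) 1 1 = 1" using rec2[of 6] lv6_9 by (simp add: One_nat_def[symmetric])
lemma lv7_3: "L 7 (-4) 1 2 = 3" using rec3[of 6] lv6_10 lv6_1 by (simp add: One_nat_def[symmetric])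
lemma lv7_4: "L 7 (-4) 1 3 = 10" using rec4[of 6] lv6_11 lv6_2 by (simp add: One_nat_def[symmetric])
lemma lv7_5: "L 7 (-4) 1 5 = 295" using rec5[of 6] lv6_0 lv6_13 lv6_4 by (simp add: One_nat_def[symmetric])
lemma lv7_6: "L 7 (-4) 2 0 = 1" using rec6[of 6] lv6_19 by (simp add: One_nat_def[symmetric])
lemma lv7_7: "L 7 (-4) 2 1 = 13" using rec7[of 6] lv6_14 lv6_8 by (simp add: One_nat_def[symmetric])
lemma lv7_8: "L 7 (-2) 1 0 = 1" using rec8[of 6] lv6_19 by (simp add: One_nat_def[symmetric])
lemma lv7_9: "L 7 (-2) 1 1 = 1" using rec9[of 6] lv6_8 by (simp add: One_nat_def[symmetric])
lemma lv7_10: "L 7 (-2) 1 2 = 2" using rec10[of 6] lv6_9 by (simp add: One_nat_def[symmetric])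
lemma lv7_11: "L 7 (-2) 1 3 = 7" using rec11[of 6] lv6_10 lv6_1 by (simp add: One_nat_def[symmetric])
lemma lv7_12: "L 7 (-2) 1 4 = 32" using rec12[of 6] lv6_11 lv6_2 by (simp add: One_nat_def[symmetric])
lemma lv7_13: "L 7 (-2) 1 5 = 190" using rec13[of 6] lv6_12 lv6_3 by (simp add: One_nat_def[symmetric])
lemma lv7_14: "L 7 (-2) 2 1 = 13" using rec14[of 6] lv6_19 lv6_20 by (simp add: One_nat_def[symmetric])
lemma lv7_15: "L 7 (-2) 2 2 = 34" using rec15[of 6] lv6_14 lv6_8 lv6_21 by (simp add: One_nat_def[symmetric])
lemma lv7_16: "L 7 (-2) 2 3 = 115" using rec16[of 6] lv6_15 lv6_6 lv6_9 lv6_22 by (simp add: One_nat_def[symmetric])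
lemma lv7_17: "L 7 (-2) 2 4 = 514" using rec17[of 6] lv6_10 lv6_1 lv6_23 lv6_16 lv6_7 by (simp add: One_nat_def[symmetric])
lemma lv7_18: "L 7 (-2) 3 1 = 16" using rec18[of 6] lv6_24 lv6_29 by (simp add: One_nat_def[symmetric])
lemma lv7_19: "L 7 0 0 0 = 1" using rec19[of 6] lv6_19 by (simp add: One_nat_def[symmetric])
lemma lv7_20: "L 7 0 1 1 = 7" using rec20[of 6] lv6_19 lv6_20 by (simp add: One_nat_def[symmetric])
lemma lv7_21: "L 7 0 1 2 = 6" using rec21[of 6] lv6_8 lv6_21 by (simp add: One_nat_def[symmetric])
lemma lv7_22: "L 7 0 1 3 = 15" using rec22[of 6] lv6_9 lv6_22 by (simp add: One_nat_def[symmetric])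
lemma lv7_23: "L 7 0 1 4 = 53" using rec23[of 6] lv6_10 lv6_1 lv6_23 by (simp add: One_nat_def[symmetric])
lemma lv7_24: "L 7 0 2 1 = 6" using rec24[of 6] lv6_24 lv6_29 by (simp add: One_nat_def[symmetric])
lemma lv7_25: "L 7 0 2 2 = 91" using rec25[of 6] lv6_19 lv6_25 lv6_20 by (simp add: One_nat_def[symmetric])
lemma lv7_26: "L 7 0 3 1 = 15" using rec26[of 6] lv6_30 lv6_26 by (simp add: One_nat_def[symmetric])
lemma lv7_27: "L 7 0 3 3 = 1855" using rec27[of 6] lv6_19 lv6_32 lv6_18 lv6_27 lv6_25 lv6_20 by (simp add: One_nat_def[symmetric])
lemma lv7_28: "L 7 0 4 1 = 53" using rec28[of 6] lv6_40 lv6_28 lv6_33 by (simp add: One_nat_def[symmetric])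
lemma lv7_29: "L 7 2 0 1 = 1" using rec29[of 6] lv6_19 by (simp add: One_nat_def[symmetric])
lemma lv7_30: "L 7 2 1 1 = 1" using rec30[of 6] lv6_29 by (simp add: One_nat_def[symmetric])
lemma lv7_31: "L 7 2 1 2 = 13" using rec31[of 6] lv6_19 lv6_20 by (simp add: One_nat_def[symmetric])
lemma lv7_32: "L 7 2 1 3 = 16" using rec32[of 6] lv6_8 lv6_21 by (simp add: One_nat_def[symmetric])
lemma lv7_33: "L 7 2 2 1 = 2" using rec33[of 6] lv6_30 by (simp add: One_nat_def[symmetric])
lemma lv7_34: "L 7 2 2 2 = 34" using rec34[of 6] lv6_24 lv6_29 lv6_31 by (simp add: One_nat_def[symmetric])
lemma lv7_35: "L 7 2 3 1 = 7" using rec35[of 6] lv6_40 lv6_33 by (simp add: One_nat_def[symmetric])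
lemma lv7_36: "L 7 2 3 2 = 115" using rec36[of 6] lv6_30 lv6_26 lv6_34 lv6_41 by (simp add: One_nat_def[symmetric])
lemma lv7_37: "L 7 2 4 1 = 32" using rec37[of 6] lv6_35 lv6_42 by (simp add: One_nat_def[symmetric])
lemma lv7_38: "L 7 2 4 2 = 514" using rec38[of 6] lv6_28 lv6_40 lv6_36 lv6_43 lv6_33 by (simp add: One_nat_def[symmetric])
lemma lv7_39: "L 7 2 5 1 = 190" using rec39[of 6] lv6_44 lv6_37 by (simp add: One_nat_def[symmetric])
lemma lv7_40: "L 7 4 0 1 = 1" using rec40[of 6] lv6_29 by (simp add: One_nat_def[symmetric])
lemma lv7_41: "L 7 4 0 2 = 1" using rec41[of 6] lv6_19 by (simp add: One_nat_def[symmetric])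
lemma lv7_42: "L 7 4 1 1 = 1" using rec42[of 6] lv6_30 by (simp add: One_nat_def[symmetric])
lemma lv7_43: "L 7 4 1 2 = 13" using rec43[of 6] lv6_29 lv6_31 by (simp add: One_nat_def[symmetric])
lemma lv7_44: "L 7 4 2 1 = 3" using rec44[of 6] lv6_40 lv6_33 by (simp add: One_nat_def[symmetric])
lemma lv7_45: "L 7 4 3 1 = 10" using rec45[of 6] lv6_35 lv6_42 by (simp add: One_nat_def[symmetric])
lemma lv7_46: "L 7 4 5 1 = 295" using rec46[of 6] lv6_45 lv6_39 lv6_47 by (simp add: One_nat_def[symmetric])
lemma lv7_47: "L 7 6 1 1 = 1" using rec47[of 6] lv6_40 by (simp add: One_nat_def[symmetric])
definition PolyOK :: "nat \<Rightarrow> bool" where "PolyOK n \<longleftrightarrow> (L n (-6) 1 1 = (((0) * real n ^ 3 + (0) * real n ^ 2 + (0) * real n + (1)) / 1) \<and>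
  L n (-4) 1 0 = (((0) * real n ^ 3 + (0) * real n ^ 2 + (0) * real n + (1)) / 1) \<and>
  L n (-4) 1 1 = (((0) * real n ^ 3 + (0) * real n ^ 2 + (0) * real n + (1)) / 1) \<and>
  L n (-4) 1 2 = (((0) * real n ^ 3 + (0) * real n ^ 2 + (0) * real n + (3)) / 1) \<and>
  L n (-4) 1 3 = (((0) * real n ^ 3 + (0) * real n ^ 2 + (0) * real n + (10)) / 1) \<and>
  L n (-4) 1 5 = (((0) * real n ^ 3 + (0) * real n ^ 2 + (0) * real n + (295)) / 1) \<and>
  L n (-4) 2 0 = (((0) * real n ^ 3 + (0) * real n ^ 2 + (0) * real n + (1)) / 1) \<and>
  L n (-4) 2 1 = (((0) * real n ^ 3 + (0) * real n ^ 2 + (2) * real n + (-1)) / 1) \<and>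
  L n (-2) 1 0 = (((0) * real n ^ 3 + (0) * real n ^ 2 + (0) * real n + (1)) / 1) \<and>
  L n (-2) 1 1 = (((0) * real n ^ 3 + (0) * real n ^ 2 + (0) * real n + (1)) / 1) \<and>
  L n (-2) 1 2 = (((0) * real n ^ 3 + (0) * real n ^ 2 + (0) * real n + (2)) / 1) \<and>
  L n (-2) 1 3 = (((0) * real n ^ 3 + (0) * real n ^ 2 + (0) * real n + (7)) / 1) \<and>
  L n (-2) 1 4 = (((0) * real n ^ 3 + (0) * real n ^ 2 + (0) * real n + (32)) / 1) \<and>
  L n (-2) 1 5 = (((0) * real n ^ 3 + (0) * real n ^ 2 + (0) * real n + (190)) / 1) \<and>
  L n (-2) 2 1 = (((0) * real n ^ 3 + (0) * real n ^ 2 + (2) * real n + (-1)) / 1) \<and>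
  L n (-2) 2 2 = (((0) * real n ^ 3 + (0) * real n ^ 2 + (6) * real n + (-8)) / 1) \<and>
  L n (-2) 2 3 = (((0) * real n ^ 3 + (0) * real n ^ 2 + (24) * real n + (-53)) / 1) \<and>
  L n (-2) 2 4 = (((0) * real n ^ 3 + (0) * real n ^ 2 + (130) * real n + (-396)) / 1) \<and>
  L n (-2) 3 1 = (((0) * real n ^ 3 + (0) * real n ^ 2 + (3) * real n + (-5)) / 1) \<and>
  L n 0 0 0 = (((0) * real n ^ 3 + (0) * real n ^ 2 + (0) * real n + (1)) / 1) \<and>
  L n 0 1 1 = (((0) * real n ^ 3 + (0) * real n ^ 2 + (1) * real n + (0)) / 1) \<and>
  L n 0 1 2 = (((0) * real n ^ 3 + (0) * real n ^ 2 + (1) * real n + (-1)) / 1) \<and>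
  L n 0 1 3 = (((0) * real n ^ 3 + (0) * real n ^ 2 + (3) * real n + (-6)) / 1) \<and>
  L n 0 1 4 = (((0) * real n ^ 3 + (0) * real n ^ 2 + (13) * real n + (-38)) / 1) \<and>
  L n 0 2 1 = (((0) * real n ^ 3 + (0) * real n ^ 2 + (1) * real n + (-1)) / 1) \<and>
  L n 0 2 2 = (((0) * real n ^ 3 + (2) * real n ^ 2 + (-1) * real n + (0)) / 1) \<and>
  L n 0 3 1 = (((0) * real n ^ 3 + (0) * real n ^ 2 + (3) * real n + (-6)) / 1) \<and>
  L n 0 3 3 = (((6) * real n ^ 3 + (0) * real n ^ 2 + (-35) * real n + (42)) / 1) \<and>
  L n 0 4 1 = (((0) * real n ^ 3 + (0) * real n ^ 2 + (13) * real n + (-38)) / 1) \<and>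
  L n 2 0 1 = (((0) * real n ^ 3 + (0) * real n ^ 2 + (0) * real n + (1)) / 1) \<and>
  L n 2 1 1 = (((0) * real n ^ 3 + (0) * real n ^ 2 + (0) * real n + (1)) / 1) \<and>
  L n 2 1 2 = (((0) * real n ^ 3 + (0) * real n ^ 2 + (2) * real n + (-1)) / 1) \<and>
  L n 2 1 3 = (((0) * real n ^ 3 + (0) * real n ^ 2 + (3) * real n + (-5)) / 1) \<and>
  L n 2 2 1 = (((0) * real n ^ 3 + (0) * real n ^ 2 + (0) * real n + (2)) / 1) \<and>
  L n 2 2 2 = (((0) * real n ^ 3 + (0) * real n ^ 2 + (6) * real n + (-8)) / 1) \<and>
  L n 2 3 1 = (((0) * real n ^ 3 + (0) * real n ^ 2 + (0) * real n + (7)) / 1) \<and>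
  L n 2 3 2 = (((0) * real n ^ 3 + (0) * real n ^ 2 + (24) * real n + (-53)) / 1) \<and>
  L n 2 4 1 = (((0) * real n ^ 3 + (0) * real n ^ 2 + (0) * real n + (32)) / 1) \<and>
  L n 2 4 2 = (((0) * real n ^ 3 + (0) * real n ^ 2 + (130) * real n + (-396)) / 1) \<and>
  L n 2 5 1 = (((0) * real n ^ 3 + (0) * real n ^ 2 + (0) * real n + (190)) / 1) \<and>
  L n 4 0 1 = (((0) * real n ^ 3 + (0) * real n ^ 2 + (0) * real n + (1)) / 1) \<and>
  L n 4 0 2 = (((0) * real n ^ 3 + (0) * real n ^ 2 + (0) * real n + (1)) / 1) \<and>
  L n 4 1 1 = (((0) * real n ^ 3 + (0) * real n ^ 2 + (0) * real n + (1)) / 1) \<and>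
  L n 4 1 2 = (((0) * real n ^ 3 + (0) * real n ^ 2 + (2) * real n + (-1)) / 1) \<and>
  L n 4 2 1 = (((0) * real n ^ 3 + (0) * real n ^ 2 + (0) * real n + (3)) / 1) \<and>
  L n 4 3 1 = (((0) * real n ^ 3 + (0) * real n ^ 2 + (0) * real n + (10)) / 1) \<and>
  L n 4 5 1 = (((0) * real n ^ 3 + (0) * real n ^ 2 + (0) * real n + (295)) / 1) \<and>
  L n 6 1 1 = (((0) * real n ^ 3 + (0) * real n ^ 2 + (0) * real n + (1)) / 1))"
lemma PolyOK_7: "PolyOK 7" unfolding PolyOK_def by (simp add: lv7_0 lv7_1 lv7_2 lv7_3 lv7_4 lv7_5 lv7_6 lv7_7 lv7_8 lv7_9 lv7_10 lv7_11 lv7_12 lv7_13 lv7_14 lv7_15 lv7_16 lv7_17 lv7_18 lv7_19 lv7_20 lv7_21 lv7_22 lv7_23 lv7_24 lv7_25 lv7_26 lv7_27 lv7_28 lv7_29 lv7_30 lv7_31 lv7_32 lv7_33 lv7_34 lv7_35 lv7_36 lv7_37 lv7_38 lv7_39 lv7_40 lv7_41 lv7_42 lv7_43 lv7_44 lv7_45 lv7_46 lv7_47)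
lemma PolyOK_Suc: assumes "PolyOK n" shows "PolyOK (Suc n)"
proof -
  note P = assms[unfolded PolyOK_def]
  have s0: "L (Suc n) (-6) 1 1 = (((0) * (1 + real n) ^ 3 + (0) * (1 + real n) ^ 2 + (0) * (1 + real n) + (1)) / 1)"
    unfolding rec0 using P by (simp add: algebra_simps power2_eq_square power3_eq_cube)
  have s1: "L (Suc n) (-4) 1 0 = (((0) * (1 + real n) ^ 3 + (0) * (1 + real n) ^ 2 + (0) * (1 + real n) + (1)) / 1)"
    unfolding rec1 using P by (simp add: algebra_simps power2_eq_square power3_eq_cube)
  have s2: "L (Suc n) (-4) 1 1 = (((0) * (1 + real n) ^ 3 + (0) * (1 + real n) ^ 2 + (0) * (1 + real n) + (1)) / 1)"
    unfolding rec2 using P by (simp add: algebra_simps power2_eq_square power3_eq_cube)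
  have s3: "L (Suc n) (-4) 1 2 = (((0) * (1 + real n) ^ 3 + (0) * (1 + real n) ^ 2 + (0) * (1 + real n) + (3)) / 1)"
    unfolding rec3 using P by (simp add: algebra_simps power2_eq_square power3_eq_cube)
  have s4: "L (Suc n) (-4) 1 3 = (((0) * (1 + real n) ^ 3 + (0) * (1 + real n) ^ 2 + (0) * (1 + real n) + (10)) / 1)"
    unfolding rec4 using P by (simp add: algebra_simps power2_eq_square power3_eq_cube)
  have s5: "L (Suc n) (-4) 1 5 = (((0) * (1 + real n) ^ 3 + (0) * (1 + real n) ^ 2 + (0) * (1 + real n) + (295)) / 1)"
    unfolding rec5 using P by (simp add: algebra_simps power2_eq_square power3_eq_cube)
  have s6: "L (Suc n) (-4) 2 0 = (((0) * (1 + real n) ^ 3 + (0) * (1 + real n) ^ 2 + (0) * (1 + real n) + (1)) / 1)"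
    unfolding rec6 using P by (simp add: algebra_simps power2_eq_square power3_eq_cube)
  have s7: "L (Suc n) (-4) 2 1 = (((0) * (1 + real n) ^ 3 + (0) * (1 + real n) ^ 2 + (2) * (1 + real n) + (-1)) / 1)"
    unfolding rec7 using P by (simp add: algebra_simps power2_eq_square power3_eq_cube)
  have s8: "L (Suc n) (-2) 1 0 = (((0) * (1 + real n) ^ 3 + (0) * (1 + real n) ^ 2 + (0) * (1 + real n) + (1)) / 1)"
    unfolding rec8 using P by (simp add: algebra_simps power2_eq_square power3_eq_cube)
  have s9: "L (Suc n) (-2) 1 1 = (((0) * (1 + real n) ^ 3 + (0) * (1 + real n) ^ 2 + (0) * (1 + real n) + (1)) / 1)"
    unfolding rec9 using P by (simp add: algebra_simps power2_eq_square power3_eq_cube)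
  have s10: "L (Suc n) (-2) 1 2 = (((0) * (1 + real n) ^ 3 + (0) * (1 + real n) ^ 2 + (0) * (1 + real n) + (2)) / 1)"
    unfolding rec10 using P by (simp add: algebra_simps power2_eq_square power3_eq_cube)
  have s11: "L (Suc n) (-2) 1 3 = (((0) * (1 + real n) ^ 3 + (0) * (1 + real n) ^ 2 + (0) * (1 + real n) + (7)) / 1)"
    unfolding rec11 using P by (simp add: algebra_simps power2_eq_square power3_eq_cube)
  have s12: "L (Suc n) (-2) 1 4 = (((0) * (1 + real n) ^ 3 + (0) * (1 + real n) ^ 2 + (0) * (1 + real n) + (32)) / 1)"
    unfolding rec12 using P by (simp add: algebra_simps power2_eq_square power3_eq_cube)
  have s13: "L (Suc n) (-2) 1 5 = (((0) * (1 + real n) ^ 3 + (0) * (1 + real n) ^ 2 + (0) * (1 + real n) + (190)) / 1)"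
    unfolding rec13 using P by (simp add: algebra_simps power2_eq_square power3_eq_cube)
  have s14: "L (Suc n) (-2) 2 1 = (((0) * (1 + real n) ^ 3 + (0) * (1 + real n) ^ 2 + (2) * (1 + real n) + (-1)) / 1)"
    unfolding rec14 using P by (simp add: algebra_simps power2_eq_square power3_eq_cube)
  have s15: "L (Suc n) (-2) 2 2 = (((0) * (1 + real n) ^ 3 + (0) * (1 + real n) ^ 2 + (6) * (1 + real n) + (-8)) / 1)"
    unfolding rec15 using P by (simp add: algebra_simps power2_eq_square power3_eq_cube)
  have s16: "L (Suc n) (-2) 2 3 = (((0) * (1 + real n) ^ 3 + (0) * (1 + real n) ^ 2 + (24) * (1 + real n) + (-53)) / 1)"
    unfolding rec16 using P by (simp add: algebra_simps power2_eq_square power3_eq_cube)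
  have s17: "L (Suc n) (-2) 2 4 = (((0) * (1 + real n) ^ 3 + (0) * (1 + real n) ^ 2 + (130) * (1 + real n) + (-396)) / 1)"
    unfolding rec17 using P by (simp add: algebra_simps power2_eq_square power3_eq_cube)
  have s18: "L (Suc n) (-2) 3 1 = (((0) * (1 + real n) ^ 3 + (0) * (1 + real n) ^ 2 + (3) * (1 + real n) + (-5)) / 1)"
    unfolding rec18 using P by (simp add: algebra_simps power2_eq_square power3_eq_cube)
  have s19: "L (Suc n) 0 0 0 = (((0) * (1 + real n) ^ 3 + (0) * (1 + real n) ^ 2 + (0) * (1 + real n) + (1)) / 1)"
    unfolding rec19 using P by (simp add: algebra_simps power2_eq_square power3_eq_cube)
  have s20: "L (Suc n) 0 1 1 = (((0) * (1 + real n) ^ 3 + (0) * (1 + real n) ^ 2 + (1) * (1 + real n) + (0)) / 1)"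
    unfolding rec20 using P by (simp add: algebra_simps power2_eq_square power3_eq_cube)
  have s21: "L (Suc n) 0 1 2 = (((0) * (1 + real n) ^ 3 + (0) * (1 + real n) ^ 2 + (1) * (1 + real n) + (-1)) / 1)"
    unfolding rec21 using P by (simp add: algebra_simps power2_eq_square power3_eq_cube)
  have s22: "L (Suc n) 0 1 3 = (((0) * (1 + real n) ^ 3 + (0) * (1 + real n) ^ 2 + (3) * (1 + real n) + (-6)) / 1)"
    unfolding rec22 using P by (simp add: algebra_simps power2_eq_square power3_eq_cube)
  have s23: "L (Suc n) 0 1 4 = (((0) * (1 + real n) ^ 3 + (0) * (1 + real n) ^ 2 + (13) * (1 + real n) + (-38)) / 1)"
    unfolding rec23 using P by (simp add: algebra_simps power2_eq_square power3_eq_cube)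
  have s24: "L (Suc n) 0 2 1 = (((0) * (1 + real n) ^ 3 + (0) * (1 + real n) ^ 2 + (1) * (1 + real n) + (-1)) / 1)"
    unfolding rec24 using P by (simp add: algebra_simps power2_eq_square power3_eq_cube)
  have s25: "L (Suc n) 0 2 2 = (((0) * (1 + real n) ^ 3 + (2) * (1 + real n) ^ 2 + (-1) * (1 + real n) + (0)) / 1)"
    unfolding rec25 using P by (simp add: algebra_simps power2_eq_square power3_eq_cube)
  have s26: "L (Suc n) 0 3 1 = (((0) * (1 + real n) ^ 3 + (0) * (1 + real n) ^ 2 + (3) * (1 + real n) + (-6)) / 1)"
    unfolding rec26 using P by (simp add: algebra_simps power2_eq_square power3_eq_cube)
  have s27: "L (Suc n) 0 3 3 = (((6) * (1 + real n) ^ 3 + (0) * (1 + real n) ^ 2 + (-35) * (1 + real n) + (42)) / 1)"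
    unfolding rec27 using P by (simp add: algebra_simps power2_eq_square power3_eq_cube)
  have s28: "L (Suc n) 0 4 1 = (((0) * (1 + real n) ^ 3 + (0) * (1 + real n) ^ 2 + (13) * (1 + real n) + (-38)) / 1)"
    unfolding rec28 using P by (simp add: algebra_simps power2_eq_square power3_eq_cube)
  have s29: "L (Suc n) 2 0 1 = (((0) * (1 + real n) ^ 3 + (0) * (1 + real n) ^ 2 + (0) * (1 + real n) + (1)) / 1)"
    unfolding rec29 using P by (simp add: algebra_simps power2_eq_square power3_eq_cube)
  have s30: "L (Suc n) 2 1 1 = (((0) * (1 + real n) ^ 3 + (0) * (1 + real n) ^ 2 + (0) * (1 + real n) + (1)) / 1)"
    unfolding rec30 using P by (simp add: algebra_simps power2_eq_square power3_eq_cube)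
  have s31: "L (Suc n) 2 1 2 = (((0) * (1 + real n) ^ 3 + (0) * (1 + real n) ^ 2 + (2) * (1 + real n) + (-1)) / 1)"
    unfolding rec31 using P by (simp add: algebra_simps power2_eq_square power3_eq_cube)
  have s32: "L (Suc n) 2 1 3 = (((0) * (1 + real n) ^ 3 + (0) * (1 + real n) ^ 2 + (3) * (1 + real n) + (-5)) / 1)"
    unfolding rec32 using P by (simp add: algebra_simps power2_eq_square power3_eq_cube)
  have s33: "L (Suc n) 2 2 1 = (((0) * (1 + real n) ^ 3 + (0) * (1 + real n) ^ 2 + (0) * (1 + real n) + (2)) / 1)"
    unfolding rec33 using P by (simp add: algebra_simps power2_eq_square power3_eq_cube)
  have s34: "L (Suc n) 2 2 2 = (((0) * (1 + real n) ^ 3 + (0) * (1 + real n) ^ 2 + (6) * (1 + real n) + (-8)) / 1)"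
    unfolding rec34 using P by (simp add: algebra_simps power2_eq_square power3_eq_cube)
  have s35: "L (Suc n) 2 3 1 = (((0) * (1 + real n) ^ 3 + (0) * (1 + real n) ^ 2 + (0) * (1 + real n) + (7)) / 1)"
    unfolding rec35 using P by (simp add: algebra_simps power2_eq_square power3_eq_cube)
  have s36: "L (Suc n) 2 3 2 = (((0) * (1 + real n) ^ 3 + (0) * (1 + real n) ^ 2 + (24) * (1 + real n) + (-53)) / 1)"
    unfolding rec36 using P by (simp add: algebra_simps power2_eq_square power3_eq_cube)
  have s37: "L (Suc n) 2 4 1 = (((0) * (1 + real n) ^ 3 + (0) * (1 + real n) ^ 2 + (0) * (1 + real n) + (32)) / 1)"
    unfolding rec37 using P by (simp add: algebra_simps power2_eq_square power3_eq_cube)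
  have s38: "L (Suc n) 2 4 2 = (((0) * (1 + real n) ^ 3 + (0) * (1 + real n) ^ 2 + (130) * (1 + real n) + (-396)) / 1)"
    unfolding rec38 using P by (simp add: algebra_simps power2_eq_square power3_eq_cube)
  have s39: "L (Suc n) 2 5 1 = (((0) * (1 + real n) ^ 3 + (0) * (1 + real n) ^ 2 + (0) * (1 + real n) + (190)) / 1)"
    unfolding rec39 using P by (simp add: algebra_simps power2_eq_square power3_eq_cube)
  have s40: "L (Suc n) 4 0 1 = (((0) * (1 + real n) ^ 3 + (0) * (1 + real n) ^ 2 + (0) * (1 + real n) + (1)) / 1)"
    unfolding rec40 using P by (simp add: algebra_simps power2_eq_square power3_eq_cube)
  have s41: "L (Suc n) 4 0 2 = (((0) * (1 + real n) ^ 3 + (0) * (1 + real n) ^ 2 + (0) * (1 + real n) + (1)) / 1)"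
    unfolding rec41 using P by (simp add: algebra_simps power2_eq_square power3_eq_cube)
  have s42: "L (Suc n) 4 1 1 = (((0) * (1 + real n) ^ 3 + (0) * (1 + real n) ^ 2 + (0) * (1 + real n) + (1)) / 1)"
    unfolding rec42 using P by (simp add: algebra_simps power2_eq_square power3_eq_cube)
  have s43: "L (Suc n) 4 1 2 = (((0) * (1 + real n) ^ 3 + (0) * (1 + real n) ^ 2 + (2) * (1 + real n) + (-1)) / 1)"
    unfolding rec43 using P by (simp add: algebra_simps power2_eq_square power3_eq_cube)
  have s44: "L (Suc n) 4 2 1 = (((0) * (1 + real n) ^ 3 + (0) * (1 + real n) ^ 2 + (0) * (1 + real n) + (3)) / 1)"
    unfolding rec44 using P by (simp add: algebra_simps power2_eq_square power3_eq_cube)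
  have s45: "L (Suc n) 4 3 1 = (((0) * (1 + real n) ^ 3 + (0) * (1 + real n) ^ 2 + (0) * (1 + real n) + (10)) / 1)"
    unfolding rec45 using P by (simp add: algebra_simps power2_eq_square power3_eq_cube)
  have s46: "L (Suc n) 4 5 1 = (((0) * (1 + real n) ^ 3 + (0) * (1 + real n) ^ 2 + (0) * (1 + real n) + (295)) / 1)"
    unfolding rec46 using P by (simp add: algebra_simps power2_eq_square power3_eq_cube)
  have s47: "L (Suc n) 6 1 1 = (((0) * (1 + real n) ^ 3 + (0) * (1 + real n) ^ 2 + (0) * (1 + real n) + (1)) / 1)"
    unfolding rec47 using P by (simp add: algebra_simps power2_eq_square power3_eq_cube)
  show ?thesis by (simp only: PolyOK_def of_nat_Suc s0 s1 s2 s3 s4 s5 s6 s7 s8 s9 s10 s11 s12 s13 s14 s15 s16 s17 s18 s19 s20 s21 s22 s23 s24 s25 s26 s27 s28 s29 s30 s31 s32 s33 s34 s35 s36 s37 s38 s39 s40 s41 s42 s43 s44 s45 s46 s47)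
qed
lemma PolyOK_ge: "7 \<le> n \<Longrightarrow> PolyOK n"
  by (induction n rule: dec_induct) (auto intro: PolyOK_7 PolyOK_Suc)



lemma W2: "W (L n) 2 0 0 0 = 2 * L n 0 1 1"
  using zero_all[of n] by (simp add: W_eq; linarith?)

lemma mu2_L: "mu n 2 = (2 * L n 0 1 1) / 4"
  using W2[of n] by (simp add: mu_G G_W)

lemma W4: "W (L n) 4 0 0 0 = 4 * L n (-2) 1 3 + 6 * L n 0 2 2 + 4 * L n 2 3 1"
  using zero_all[of n] by (simp add: W_eq; linarith?)

lemma mu4_L: "mu n 4 = (4 * L n (-2) 1 3 + 6 * L n 0 2 2 + 4 * L n 2 3 1) / 16"
  using W4[of n] by (simp add: mu_G G_W)

lemma W6: "W (L n) 6 0 0 0 = 6 * L n (-4) 1 5 + 15 * L n (-2) 2 4 + 20 * L n 0 3 3 + 15 * L n 2 4 2 + 6 * L n 4 5 1"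
  using zero_all[of n] by (simp add: W_eq; linarith?)

lemma mu6_L: "mu n 6 = (6 * L n (-4) 1 5 + 15 * L n (-2) 2 4 + 20 * L n 0 3 3 + 15 * L n 2 4 2 + 6 * L n 4 5 1) / 64"
  using W6[of n] by (simp add: mu_G G_W)

lemma mu2_big: "7 \<le> n \<Longrightarrow> mu n 2 = (((0) * real n ^ 3 + (0) * real n ^ 2 + (1) * real n + (0)) / 2)"
  using PolyOK_ge[of n] unfolding PolyOK_def mu2_L by (simp add: field_simps)

lemma mu4_big: "7 \<le> n \<Longrightarrow> mu n 4 = (((0) * real n ^ 3 + (6) * real n ^ 2 + (-3) * real n + (28)) / 8)"
  using PolyOK_ge[of n] unfolding PolyOK_def mu4_L by (simp add: field_simps)

lemma mu6_big: "7 \<le> n \<Longrightarrow> mu n 6 = (((30) * real n ^ 3 + (0) * real n ^ 2 + (800) * real n + (-1875)) / 16)"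
  using PolyOK_ge[of n] unfolding PolyOK_def mu6_L by (simp add: field_simps)

lemma mu2_1: "mu 1 2 = 1 / 2"
  unfolding mu2_L by (simp add: lv1_20)

lemma mu2_2: "mu 2 2 = 1 / 1"
  unfolding mu2_L by (simp add: lv2_20)

lemma mu2_3: "mu 3 2 = 3 / 2"
  unfolding mu2_L by (simp add: lv3_20)

lemma mu2_4: "mu 4 2 = 2 / 1"
  unfolding mu2_L by (simp add: lv4_20)

lemma mu2_5: "mu 5 2 = 5 / 2"
  unfolding mu2_L by (simp add: lv5_20)

lemma mu2_6: "mu 6 2 = 3 / 1"
  unfolding mu2_L by (simp add: lv6_20)

lemma mu4_4: "mu 4 4 = 14 / 1"
  unfolding mu4_L by (simp add: lv4_35 lv4_25 lv4_11)

lemma mu4_5: "mu 5 4 = 163 / 8"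
  unfolding mu4_L by (simp add: lv5_35 lv5_25 lv5_11)

lemma mu4_6: "mu 6 4 = 113 / 4"
  unfolding mu4_L by (simp add: lv6_35 lv6_25 lv6_11)

theorem theoremB:
  shows "(\<forall>n m. n \<ge> 1 \<longrightarrow> odd m \<longrightarrow> cumulant (lebesgue_on {0..1}) (S n) m = 0)
    \<and> (\<forall>n. n \<ge> 1 \<longrightarrow> cumulant (lebesgue_on {0..1}) (S n) 2 = real n / 2)
    \<and> (\<forall>n. n \<ge> 4 \<longrightarrow> cumulant (lebesgue_on {0..1}) (S n) 4 = (- 3 * real n + 28) / 8)
    \<and> (\<forall>n. n \<ge> 7 \<longrightarrow> cumulant (lebesgue_on {0..1}) (S n) 6
          = (45 * (real n)^2 + 380 * real n - 1875) / 16)"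
proof (intro conjI allI impI)
  fix n m :: nat assume "odd m"
  then show "cumulant (lebesgue_on {0..1}) (S n) m = 0" by (rule cumulant_odd)
next
  fix n :: nat assume n: "n \<ge> 1"
  show "cumulant (lebesgue_on {0..1}) (S n) 2 = real n / 2"
  proof (cases "n \<ge> 7")
    case True then show ?thesis by (simp add: cumulant_2 mu2_big)
  next
    case False
    then have "n = 1 \<or> n = 2 \<or> n = 3 \<or> n = 4 \<or> n = 5 \<or> n = 6" using n by arith
    then show ?thesis by (auto simp: cumulant_2 mu2_1 mu2_2 mu2_3 mu2_4 mu2_5 mu2_6)
  qed
next
  fix n :: nat assume n: "n \<ge> 4"
  show "cumulant (lebesgue_on {0..1}) (S n) 4 = (- 3 * real n + 28) / 8"
  proof (cases "n \<ge> 7")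
    case True then show ?thesis
      by (simp add: cumulant_4 mu2_big mu4_big field_simps power2_eq_square)
  next
    case False
    then have "n = 4 \<or> n = 5 \<or> n = 6" using n by arith
    then show ?thesis by (auto simp: cumulant_4 mu2_4 mu2_5 mu2_6 mu4_4 mu4_5 mu4_6 power2_eq_square)
  qed
next
  fix n :: nat assume n: "n \<ge> 7"
  show "cumulant (lebesgue_on {0..1}) (S n) 6 = (45 * (real n)^2 + 380 * real n - 1875) / 16"
    using n by (simp add: cumulant_6 mu2_big mu4_big mu6_big field_simps power2_eq_square power3_eq_cube)
qed


end
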